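(* In the setting below (ReLU approximation family $\mathcal N=(\mathcal N_M)_M$ in $L^p(\Omega\to(\mathbb R^{d_{\mathrm{out}}},\|\cdot\|),\mu)$ with $C_p(\Omega,\mu)<\infty$, $q\in[1,\infty]\cup\{F,\max\}$, depth bounds $L_M$ and norm bounds $r_M\ge1$), assume that for every $h>0$, $$L_M\,M\,(1+\log_2(r_M))=O(M^{1+h})\quad(M\to\infty).$$ Then $\mathcal N$ is $\infty$-encodable in $L^p(\Omega\to(\mathbb R^{d_{\mathrm{out}}},\|\cdot\|),\mu)$ (with the metric induced by $\|\cdot\|_{p,\|\cdot\|}$).
   Context: ReLU $\rho(x)=\max(0,x)$ coordinatewise; architecture $(L,\mathbf N)$, $\mathbf N=(N_0,\dots,N_L)$; parameters $\theta=(W_1,\dots,W_L,b_1,\dots,b_L)$, $W_\ell\in\mathbb R^{N_\ell\times N_{\ell-1}}$, $b_\ell\in\mathbb R^{N_\ell}$, forming $\Theta_{L,\mathbf N}\cong\mathbb R^{d_{L,\mathbf N}}$, $d_{L,\mathbf N}=\sum_\ell N_\ell(N_{\ell-1}+1)$; realization $R_\theta(x)=W_Ly_{L-1}(x)+b_L$, $y_0=x$, $y_\ell=\rho(W_\ell y_{\ell-1}+b_\ell)$ for $1\le\ell\le L-1$. Parameter sets: for $q\in[1,\infty]$, $\Theta^q_{L,\mathbf N}(r)=\{\theta:\|W_\ell\|_{q\to q}\le r,\|b_\ell\|_q\le r\ \forall\ell\}$ (operator norm); $\Theta^F_{L,\mathbf N}(r)$: $\|W_\ell\|_F\le r$, $\|b_\ell\|_2\le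 r$; $\Theta^{\max}_{L,\mathbf N}(r)$: all entries bounded by $r$ in absolute value. $\|f\|_{p,\|\cdot\|}=(\int_\Omega\|f\|^pd\mu)^{1/p}$ ($p<\infty$) or $\operatorname{ess\,sup}_\Omega\|f\|$; $C_p(\Omega,\mu)=(\int_\Omega(\|x\|_\infty+1)^pd\mu)^{1/p}$ ($p<\infty$) or $\operatorname{ess\,sup}_\Omega\|x\|_\infty$. $\mathcal A_M$: architectures with $L\le L_M$, $N_0=d_{\mathrm{in}}$, $N_L=d_{\mathrm{out}}$, $N_\ell\le M$ for $1\le\ell\le L-1$. $S^M_{L,\mathbf N}$: supports $S\subset\{1,\dots,d_{L,\mathbf N}\}$ with $|S|\le M$. $R_{\Theta,S}=\{R_\theta:\theta\in\Theta,\ \theta\text{ vanishes outside }S\}$. $\mathcal N_M=\bigcup_{(L,\mathbf N)\in\mathcal A_M}\bigcup_{S\in S^M_{L,\mathbf N}}R_{\Theta^q_{L,\mathbf N}(r_M),S}$. A finite $X\subset A$ is an $\varepsilon$-covering of $A$ if every point of $A$ is within distance $\varepsilon$ of a point of $X$. For $\gamma,h>0$, a $(\gamma,h)$-encoding of $\Sigma=(\Sigma_M)_M$ is a sequence $(\Sigma(\gamma,h)_M)_M$ such that for some $c_1,c_2>0$ and all $M$, $\Sigma(\gamma,h)_M$ is a $c_1M^{-\gamma}$-covering of $\Sigma_M$ with $\log_2|\Sigma(\gamma,h)_M|\le c_2M^{1+h}$; $\Sigma$ is $\gamma$-encodable if it admits a $(\gamma,h)$-encoding for every $h>0$, and $\infty$-encodable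 if $\gamma$-encodable for all $\gamma>0$. *)

theory Defs
  imports "HOL-Analysis.Analysis" "HOL-Library.Landau_Symbols"
begin

definition relu_vec :: "real list \<Rightarrow> real list" where
  "relu_vec x = map (\<lambda>t. max 0 t) x"

definition mat_vec :: "real list list \<Rightarrow> real list \<Rightarrow> real list" where
  "mat_vec W x = map (\<lambda>row. sum_list (map2 (*) row x)) W"

definition vadd :: "real list \<Rightarrow> real list \<Rightarrow> real list" where
  "vadd x y = map2 (+) x y"

fun net_eval :: "(real list list \<times> real list) list \<Rightarrow> real list \<Rightarrow> real list" where
  "net_eval [] x = x"
| "net_eval [(W, b)] x = vadd (mat_vec W x) b"
| "net_eval ((W, b) # l # ls) x = net_eval (l # ls) (relu_vec (vadd (mat_vec W x) b))"

text \<open>Architecture (L, N) with N = [N_0,...,N_L]; theta has the right shapes.\<close>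
definition params_of_arch :: "nat list \<Rightarrow> (real list list \<times> real list) list \<Rightarrow> bool" where
  "params_of_arch N \<theta> \<longleftrightarrow> length \<theta> + 1 = length N \<and>
     (\<forall>l < length \<theta>. length (fst (\<theta> ! l)) = N ! (Suc l) \<and>
        (\<forall>row \<in> set (fst (\<theta> ! l)). length row = N ! l) \<and>
        length (snd (\<theta> ! l)) = N ! (Suc l))"

text \<open>Parameter positions: weight entry (l,i,j) of W_{l+1}, bias entry (l,i) of b_{l+1}.\<close>
definition param_positions :: "nat list \<Rightarrow> ((nat \<times> nat \<times> nat) + (nat \<times> nat)) set" where
  "param_positions N =
     {Inl (l, i, j) | l i j. l + 1 < length N \<and> i < N ! (Suc l) \<and> j < N ! l} \<union>
     {Inr (l, i) | l i. l + 1 < length N \<and> i < N ! (Suc l)}"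

fun param_entry :: "(real list list \<times> real list) list \<Rightarrow> ((nat \<times> nat \<times> nat) + (nat \<times> nat)) \<Rightarrow> real" where
  "param_entry \<theta> (Inl (l, i, j)) = fst (\<theta> ! l) ! i ! j"
| "param_entry \<theta> (Inr (l, i)) = snd (\<theta> ! l) ! i"

definition vanishes_outside :: "nat list \<Rightarrow> (real list list \<times> real list) list \<Rightarrow> ((nat \<times> nat \<times> nat) + (nat \<times> nat)) set \<Rightarrow> bool" where
  "vanishes_outside N \<theta> S \<longleftrightarrow> (\<forall>pos \<in> param_positions N - S. param_entry \<theta> pos = 0)"

text \<open>The index q: Lq s (s \<in> [1,\<infinity>)), Linf (q = \<infinity>), Frob (Frobenius), Maxent (max entry).\<close>
datatype norm_kind = Lq real | Linf | Frob | Maxent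

definition valid_kind :: "norm_kind \<Rightarrow> bool" where
  "valid_kind q \<longleftrightarrow> (\<forall>s. q = Lq s \<longrightarrow> 1 \<le> s)"

definition linf_vec :: "real list \<Rightarrow> real" where
  "linf_vec x = foldr (\<lambda>a m. max \<bar>a\<bar> m) x 0"

definition lq_vec :: "real \<Rightarrow> real list \<Rightarrow> real" where
  "lq_vec s x = (sum_list (map (\<lambda>a. \<bar>a\<bar> powr s) x)) powr (1 / s)"

fun qnorm_vec :: "norm_kind \<Rightarrow> real list \<Rightarrow> real" where
  "qnorm_vec (Lq s) x = lq_vec s x"
| "qnorm_vec Linf x = linf_vec x"
| "qnorm_vec Frob x = lq_vec 2 x"
| "qnorm_vec Maxent x = linf_vec x"

definition op_norm :: "norm_kind \<Rightarrow> nat \<Rightarrow> real list list \<Rightarrow> real" where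
  "op_norm q n W = Sup {qnorm_vec q (mat_vec W x) | x. length x = n \<and> qnorm_vec q x \<le> 1}"

definition frob_norm :: "real list list \<Rightarrow> real" where
  "frob_norm W = sqrt (sum_list (map (\<lambda>row. sum_list (map (\<lambda>a. a\<^sup>2) row)) W))"

definition in_param_ball :: "norm_kind \<Rightarrow> nat list \<Rightarrow> real \<Rightarrow> (real list list \<times> real list) list \<Rightarrow> bool" where
  "in_param_ball q N r \<theta> \<longleftrightarrow> (\<forall>l < length \<theta>.
     (case q of
        Frob \<Rightarrow> frob_norm (fst (\<theta> ! l)) \<le> r \<and> lq_vec 2 (snd (\<theta> ! l)) \<le> r
      | Maxent \<Rightarrow> (\<forall>row \<in> set (fst (\<theta> ! l)). \<forall>a \<in> set row. \<bar>a\<bar> \<le> r) \<and>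
                  (\<forall>a \<in> set (snd (\<theta> ! l)). \<bar>a\<bar> \<le> r)
      | _ \<Rightarrow> op_norm q (N ! l) (fst (\<theta> ! l)) \<le> r \<and> qnorm_vec q (snd (\<theta> ! l)) \<le> r))"

definition enum_idx :: "nat \<Rightarrow> 'a::finite" where
  "enum_idx = (SOME f. bij_betw f {..<CARD('a)} (UNIV :: 'a set))"

definition vec_to_list :: "real ^ 'i \<Rightarrow> real list" where
  "vec_to_list x = map (\<lambda>k. x $ enum_idx k) [0..<CARD('i)]"

definition list_to_vec :: "real list \<Rightarrow> real ^ 'o" where
  "list_to_vec y = (\<chi> j. y ! (inv_into {..<CARD('o)} enum_idx j))"

definition realization :: "(real list list \<times> real list) list \<Rightarrow> real ^ 'i \<Rightarrow> real ^ 'o" where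
  "realization \<theta> x = list_to_vec (net_eval \<theta> (vec_to_list x))"

definition relu_family ::
  "norm_kind \<Rightarrow> (nat \<Rightarrow> nat) \<Rightarrow> (nat \<Rightarrow> real) \<Rightarrow> nat \<Rightarrow> (real ^ 'i \<Rightarrow> real ^ 'o) set" where
  "relu_family q LM r M =
     {realization \<theta> | \<theta> N S.
        length N \<ge> 2 \<and> length N - 1 \<le> LM M \<and>
        N ! 0 = CARD('i) \<and> N ! (length N - 1) = CARD('o) \<and>
        (\<forall>l. 1 \<le> l \<and> l < length N - 1 \<longrightarrow> 1 \<le> N ! l \<and> N ! l \<le> M) \<and>
        params_of_arch N \<theta> \<and> in_param_ball q N (r M) \<theta> \<and>
        S \<subseteq> param_positions N \<and> card S \<le> M \<and> vanishes_outside N \<theta> S}"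

definition is_norm_fun :: "('a::real_vector \<Rightarrow> real) \<Rightarrow> bool" where
  "is_norm_fun nrm \<longleftrightarrow> (\<forall>x. nrm x = 0 \<longleftrightarrow> x = 0) \<and> (\<forall>c x. nrm (c *\<^sub>R x) = \<bar>c\<bar> * nrm x) \<and>
     (\<forall>x y. nrm (x + y) \<le> nrm x + nrm y)"

definition ess_sup_enn :: "'a measure \<Rightarrow> ('a \<Rightarrow> ennreal) \<Rightarrow> ennreal" where
  "ess_sup_enn \<mu> g = Inf {c. AE x in \<mu>. g x \<le> c}"

definition lp_norm_enn :: "'a measure \<Rightarrow> ennreal \<Rightarrow> ('a \<Rightarrow> real) \<Rightarrow> ennreal" where
  "lp_norm_enn \<mu> p g =
     (if p = top then ess_sup_enn \<mu> (\<lambda>x. ennreal (g x))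
      else (let I = (\<integral>\<^sup>+ x. ennreal (g x powr enn2real p) \<partial>\<mu>) in
            if I = top then top else ennreal (enn2real I powr (1 / enn2real p))))"

definition lp_dist :: "'a measure \<Rightarrow> ennreal \<Rightarrow> ('b::real_vector \<Rightarrow> real) \<Rightarrow> ('a \<Rightarrow> 'b) \<Rightarrow> ('a \<Rightarrow> 'b) \<Rightarrow> ennreal" where
  "lp_dist \<mu> p nrm f g = lp_norm_enn \<mu> p (\<lambda>x. nrm (f x - g x))"

definition C_p :: "(real ^ 'i) measure \<Rightarrow> ennreal \<Rightarrow> ennreal" where
  "C_p \<mu> p = (if p = top then ess_sup_enn \<mu> (\<lambda>x. ennreal (infnorm x))
              else lp_norm_enn \<mu> p (\<lambda>x. infnorm x + 1))"

definition is_covering :: "('f \<Rightarrow> 'f \<Rightarrow> ennreal) \<Rightarrow> real \<Rightarrow> 'f set \<Rightarrow> 'f set \<Rightarrow> bool" where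
  "is_covering d \<epsilon> X A \<longleftrightarrow> finite X \<and> X \<subseteq> A \<and> (\<forall>f \<in> A. \<exists>g \<in> X. d f g \<le> ennreal \<epsilon>)"

definition is_encoding :: "('f \<Rightarrow> 'f \<Rightarrow> ennreal) \<Rightarrow> (nat \<Rightarrow> 'f set) \<Rightarrow> real \<Rightarrow> real \<Rightarrow> (nat \<Rightarrow> 'f set) \<Rightarrow> bool" where
  "is_encoding d \<Sigma> \<gamma> h E \<longleftrightarrow> (\<exists>c1 > 0. \<exists>c2 > 0. \<forall>M \<ge> 1.
      is_covering d (c1 * real M powr (- \<gamma>)) (E M) (\<Sigma> M) \<and>
      log 2 (real (card (E M))) \<le> c2 * real M powr (1 + h))"

definition gamma_encodable :: "('f \<Rightarrow> 'f \<Rightarrow> ennreal) \<Rightarrow> (nat \<Rightarrow> 'f set) \<Rightarrow> real \<Rightarrow> bool" where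
  "gamma_encodable d \<Sigma> \<gamma> \<longleftrightarrow> (\<forall>h > 0. \<exists>E. is_encoding d \<Sigma> \<gamma> h E)"

definition inf_encodable :: "('f \<Rightarrow> 'f \<Rightarrow> ennreal) \<Rightarrow> (nat \<Rightarrow> 'f set) \<Rightarrow> bool" where
  "inf_encodable d \<Sigma> \<longleftrightarrow> (\<forall>\<gamma> > 0. gamma_encodable d \<Sigma> \<gamma>)"

end

theory Submission
  imports Defs
begin


lemma sum_list_map2_mult:
  "length u = n \<Longrightarrow> length v = n \<Longrightarrow> sum_list (map2 (*) u v) = (\<Sum>j<n. u!j * v!j)"
  by (simp add: sum_list_sum_nth lessThan_atLeast0)

lemma mat_vec_len[simp]: "length (mat_vec W x) = length W"
  by (simp add: mat_vec_def)

lemma mat_vec_nth: "i < length W \<Longrightarrow> mat_vec W x ! i = sum_list (map2 (*) (W!i) x)"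
  by (simp add: mat_vec_def)

lemma vadd_len[simp]: "length (vadd x y) = min (length x) (length y)"
  by (simp add: vadd_def)

lemma vadd_nth: "i < length x \<Longrightarrow> i < length y \<Longrightarrow> vadd x y ! i = x!i + y!i"
  by (simp add: vadd_def)

lemma relu_len[simp]: "length (relu_vec x) = length x"
  by (simp add: relu_vec_def)

lemma relu_nth: "i < length x \<Longrightarrow> relu_vec x ! i = max 0 (x!i)"
  by (simp add: relu_vec_def)

definition lyr_ok :: "nat \<Rightarrow> nat \<Rightarrow> real \<Rightarrow> real \<Rightarrow> (real list list \<times> real list) \<Rightarrow> (real list list \<times> real list) \<Rightarrow> bool" where
  "lyr_ok n n' R \<delta> wb wb' \<longleftrightarrow> length (fst wb) = n' \<and> length (fst wb') = n' \<and> length (snd wb) = n' \<and> length (snd wb') = n' \<and>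
     (\<forall>i<n'. length (fst wb!i) = n \<and> length (fst wb'!i) = n \<and>
        (\<forall>j<n. \<bar>fst wb!i!j\<bar> \<le> R \<and> \<bar>fst wb'!i!j\<bar> \<le> R \<and> \<bar>fst wb!i!j - fst wb'!i!j\<bar> \<le> \<delta>) \<and>
        \<bar>snd wb!i\<bar> \<le> R \<and> \<bar>snd wb!i - snd wb'!i\<bar> \<le> \<delta>)"

lemma layer_bound:
  fixes W W' :: "real list list"
  assumes ok: "lyr_ok n n' R \<delta> (W,b) (W',b')"
    and lx: "length x = n" "length x' = n"
    and bx: "\<And>j. j < n \<Longrightarrow> \<bar>x!j\<bar> \<le> X \<and> \<bar>x!j - x'!j\<bar> \<le> D"
    and nW: "n \<le> W0" and W0: "1 \<le> W0" and pos: "0 \<le> X" "0 \<le> D" "0 \<le> R" "0 \<le> \<delta>"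
    and i: "i < n'"
  shows "\<bar>vadd (mat_vec W x) b ! i\<bar> \<le> (W0*R+W0+1)*(X+1) - 1"
    and "\<bar>vadd (mat_vec W x) b ! i - vadd (mat_vec W' x') b' ! i\<bar> \<le> (W0*R+W0+1)*D + (W0*R+W0+1)*\<delta>*(X+1)"
proof -
  from ok i have lW: "length W = n'" "length W' = n'" "length b = n'" "length b' = n'"
    and lr: "length (W!i) = n" "length (W'!i) = n"
    and ent: "\<And>j. j<n \<Longrightarrow> \<bar>W!i!j\<bar> \<le> R \<and> \<bar>W'!i!j\<bar> \<le> R \<and> \<bar>W!i!j - W'!i!j\<bar> \<le> \<delta>"
    and bb: "\<bar>b!i\<bar> \<le> R" "\<bar>b!i - b'!i\<bar> \<le> \<delta>"
    by (auto simp: lyr_ok_def)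
  have e1: "vadd (mat_vec W x) b ! i = (\<Sum>j<n. W!i!j * x!j) + b!i"
    using lW lr lx i by (simp add: vadd_nth mat_vec_nth sum_list_map2_mult)
  have e2: "vadd (mat_vec W' x') b' ! i = (\<Sum>j<n. W'!i!j * x'!j) + b'!i"
    using lW lr lx i by (simp add: vadd_nth mat_vec_nth sum_list_map2_mult)
  have "\<bar>\<Sum>j<n. W!i!j * x!j\<bar> \<le> (\<Sum>j<n. R * X)"
  proof -
    have "\<bar>\<Sum>j<n. W!i!j * x!j\<bar> \<le> (\<Sum>j<n. \<bar>W!i!j * x!j\<bar>)" by (rule sum_abs)
    also have "\<dots> \<le> (\<Sum>j<n. R * X)"
      by (rule sum_mono) (use ent bx pos in \<open>auto simp: abs_mult intro!: mult_mono\<close>)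
    finally show ?thesis .
  qed
  also have "\<dots> = n * R * X" by simp
  also have "\<dots> \<le> W0 * R * X" using nW pos by (simp add: mult_right_mono)
  finally have s1: "\<bar>\<Sum>j<n. W!i!j * x!j\<bar> \<le> W0 * R * X" .
  have "R \<le> W0 * R" using W0 pos by (simp add: mult_le_cancel_right1)
  moreover have "0 \<le> W0 * X" "0 \<le> W0" using W0 pos by auto
  moreover have "\<bar>(\<Sum>j<n. W!i!j * x!j) + b!i\<bar> \<le> \<bar>\<Sum>j<n. W!i!j * x!j\<bar> + \<bar>b!i\<bar>" by (rule abs_triangle_ineq)
  moreover have "0 \<le> X" using pos by simp
  ultimately show "\<bar>vadd (mat_vec W x) b ! i\<bar> \<le> (W0*R+W0+1)*(X+1) - 1"
  proof -
    have eq: "(W0*R+W0+1)*(X+1) - 1 = W0*R*X + W0*R + W0*X + W0 + X" by (simp add: algebra_simps)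
    show ?thesis unfolding eq e1 using s1 bb \<open>R \<le> W0 * R\<close> \<open>0 \<le> W0 * X\<close> \<open>0 \<le> W0\<close> \<open>0 \<le> X\<close>
      abs_triangle_ineq[of "\<Sum>j<n. W!i!j * x!j" "b!i"] by linarith
  qed
  have "(\<Sum>j<n. W!i!j * x!j) - (\<Sum>j<n. W'!i!j * x'!j) = (\<Sum>j<n. W'!i!j * (x!j - x'!j) + (W!i!j - W'!i!j) * x!j)"
    by (simp add: sum_subtractf[symmetric] right_diff_distrib left_diff_distrib)
  hence "\<bar>(\<Sum>j<n. W!i!j * x!j) - (\<Sum>j<n. W'!i!j * x'!j)\<bar> \<le> (\<Sum>j<n. \<bar>W'!i!j * (x!j - x'!j) + (W!i!j - W'!i!j) * x!j\<bar>)"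
    by (simp only: sum_abs)
  also have "\<dots> \<le> (\<Sum>j<n. R * D + \<delta> * X)"
  proof (rule sum_mono)
    fix j assume "j \<in> {..<n}"
    hence j: "j < n" by simp
    have "\<bar>W'!i!j * (x!j - x'!j)\<bar> \<le> R * D"
      using ent[OF j] bx[OF j] pos by (auto simp: abs_mult intro!: mult_mono)
    moreover have "\<bar>(W!i!j - W'!i!j) * x!j\<bar> \<le> \<delta> * X"
      using ent[OF j] bx[OF j] pos by (auto simp: abs_mult intro!: mult_mono)
    ultimately show "\<bar>W'!i!j * (x!j - x'!j) + (W!i!j - W'!i!j) * x!j\<bar> \<le> R * D + \<delta> * X"
      using abs_triangle_ineq[of "W'!i!j * (x!j - x'!j)" "(W!i!j - W'!i!j) * x!j"] by linarith
  qed
  also have "\<dots> = n * (R * D + \<delta> * X)" by simp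
  also have "\<dots> \<le> W0 * (R * D + \<delta> * X)" using nW pos by (intro mult_right_mono) auto
  finally have s2: "\<bar>(\<Sum>j<n. W!i!j * x!j) - (\<Sum>j<n. W'!i!j * x'!j)\<bar> \<le> W0 * (R * D + \<delta> * X)" .
  have "\<bar>vadd (mat_vec W x) b ! i - vadd (mat_vec W' x') b' ! i\<bar> \<le> W0 * (R * D + \<delta> * X) + \<delta>"
    unfolding e1 e2 using s2 bb(2) by linarith
  also have "\<dots> \<le> (W0*R+W0+1)*D + (W0*R+W0+1)*\<delta>*(X+1)"
  proof -
    have "0 \<le> W0*\<delta>" "0 \<le> \<delta>*X" "0 \<le> W0*\<delta>*X" "0 \<le> W0*R*\<delta>*X" "0 \<le> W0*R*\<delta>" "0 \<le> D" "0\<le>W0*D"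
      using pos W0 by auto
    thus ?thesis by (simp add: algebra_simps)
  qed
  finally show "\<bar>vadd (mat_vec W x) b ! i - vadd (mat_vec W' x') b' ! i\<bar> \<le> (W0*R+W0+1)*D + (W0*R+W0+1)*\<delta>*(X+1)" .
qed


lemma net_eval_cons2: "rest \<noteq> [] \<Longrightarrow> net_eval ((W,b)#rest) x = net_eval rest (relu_vec (vadd (mat_vec W x) b))"
  by (cases rest) auto

lemma relu_abs: "\<bar>max 0 (a::real)\<bar> \<le> \<bar>a\<bar>" by simp
lemma relu_lip: "\<bar>max 0 (a::real) - max 0 c\<bar> \<le> \<bar>a - c\<bar>" by simp

lemma net_lip:
  fixes W0 R \<delta> :: real
  assumes W0: "1 \<le> W0" and R: "0 \<le> R" and dl: "0 \<le> \<delta>"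
  shows "\<And>\<theta>' N x x' (X::real) (D::real). length \<theta>' = length \<theta> \<Longrightarrow> length N = length \<theta> + 1 \<Longrightarrow>
    (\<forall>l<length \<theta>. lyr_ok (N!l) (N!Suc l) R \<delta> (\<theta>!l) (\<theta>'!l)) \<Longrightarrow> (\<forall>l<length N. real (N!l) \<le> W0) \<Longrightarrow>
    length x = N!0 \<Longrightarrow> length x' = N!0 \<Longrightarrow> (\<forall>j<N!0. \<bar>x!j\<bar> \<le> X \<and> \<bar>x!j - x'!j\<bar> \<le> D) \<Longrightarrow> 0 \<le> X \<Longrightarrow> 0 \<le> D \<Longrightarrow>
    length (net_eval \<theta> x) = N!length \<theta> \<and> length (net_eval \<theta>' x') = N!length \<theta> \<and>
    (\<forall>i<N!length \<theta>. \<bar>net_eval \<theta> x!i - net_eval \<theta>' x'!i\<bar> \<le> (W0*R+W0+1)^length \<theta> * (D + length \<theta> * \<delta> * (X+1)))"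
proof (induction \<theta>)
  case Nil
  then show ?case by (cases \<theta>') auto
next
  case (Cons wb rest)
  obtain W b where wb: "wb = (W,b)" by (cases wb)
  obtain wb' rest' where th': "\<theta>' = wb' # rest'" using Cons.prems(1) by (cases \<theta>') auto
  obtain W' b' where wb': "wb' = (W',b')" by (cases wb')
  obtain n0 n1 Ns where N: "N = n0 # n1 # Ns" using Cons.prems(2)
    by (metis Suc_eq_plus1 length_Cons list.exhaust list.size(3) nat.distinct(1) nat.inject)
  define A where "A = W0*R+W0+1"
  have A1: "1 \<le> A" using W0 R by (simp add: A_def)
  have ok: "lyr_ok n0 n1 R \<delta> (W,b) (W',b')" using Cons.prems(3) wb wb' th' N by force
  define y where "y = vadd (mat_vec W x) b"
  define y' where "y' = vadd (mat_vec W' x') b'"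
  have ly: "length y = n1" "length y' = n1" using ok by (auto simp: y_def y'_def lyr_ok_def)
  have n0W: "real n0 \<le> W0" using Cons.prems(4) N by force
  have yb: "\<bar>y!i\<bar> \<le> A*(X+1) - 1" "\<bar>y!i - y'!i\<bar> \<le> A*D + A*\<delta>*(X+1)" if "i < n1" for i
    using layer_bound[OF ok, of x x' X D W0 i] Cons.prems(5-9) N n0W W0 R dl that
    by (auto simp: y_def y'_def A_def)
  show ?case
  proof (cases "rest = []")
    case True
    hence "rest' = []" using Cons.prems(1) th' by simp
    have "\<forall>i<n1. \<bar>y!i - y'!i\<bar> \<le> A^1 * (D + 1*\<delta>*(X+1))" using yb by (simp add: algebra_simps)
    then show ?thesis using True th' wb wb' N ly \<open>rest' = []\<close>
      by (simp add: y_def y'_def A_def)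
  next
    case False
    hence F': "rest' \<noteq> []" using Cons.prems(1) th' by auto
    have e1: "net_eval (wb#rest) x = net_eval rest (relu_vec y)" using False wb net_eval_cons2 y_def by simp
    have e2: "net_eval \<theta>' x' = net_eval rest' (relu_vec y')" using F' th' wb' net_eval_cons2 y'_def by simp
    have X1: "0 \<le> A*(X+1) - 1" using A1 Cons.prems(8) by (smt (verit) mult_le_cancel_left1 mult_nonneg_nonneg)
    have D1: "0 \<le> A*D + A*\<delta>*(X+1)" using A1 Cons.prems(8,9) dl by simp
    have IH: "length (net_eval rest (relu_vec y)) = (n1#Ns)!length rest \<and> length (net_eval rest' (relu_vec y')) = (n1#Ns)!length rest \<and>
      (\<forall>i<(n1#Ns)!length rest. \<bar>net_eval rest (relu_vec y)!i - net_eval rest' (relu_vec y')!i\<bar> \<le> A^length rest * ((A*D + A*\<delta>*(X+1)) + length rest * \<delta> * ((A*(X+1) - 1)+1)))"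
      unfolding A_def
    proof (rule Cons.IH)
      show "length rest' = length rest" using Cons.prems(1) th' by simp
      show "length (n1 # Ns) = length rest + 1" using Cons.prems(2) N by simp
      show "\<forall>l<length rest. lyr_ok ((n1 # Ns) ! l) ((n1 # Ns) ! Suc l) R \<delta> (rest ! l) (rest' ! l)"
        using Cons.prems(3) N th' by (metis Suc_less_eq length_Cons nth_Cons_Suc)
      show "\<forall>l<length (n1 # Ns). real ((n1 # Ns) ! l) \<le> W0" using Cons.prems(4) N by auto
      show "length (relu_vec y) = (n1 # Ns) ! 0" "length (relu_vec y') = (n1 # Ns) ! 0" using ly by auto
      show "\<forall>j<(n1 # Ns) ! 0. \<bar>relu_vec y ! j\<bar> \<le> (W0*R+W0+1)*(X+1) - 1 \<and> \<bar>relu_vec y ! j - relu_vec y' ! j\<bar> \<le> (W0*R+W0+1)*D + (W0*R+W0+1)*\<delta>*(X+1)"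
      proof (intro allI impI conjI)
        fix j assume "j < (n1 # Ns) ! 0"
        hence j: "j < n1" by simp
        show "\<bar>relu_vec y ! j\<bar> \<le> (W0*R+W0+1)*(X+1) - 1"
          using yb(1)[OF j] ly j relu_abs[of "y!j"] by (simp add: relu_nth A_def)
        show "\<bar>relu_vec y ! j - relu_vec y' ! j\<bar> \<le> (W0*R+W0+1)*D + (W0*R+W0+1)*\<delta>*(X+1)"
          using yb(2)[OF j] ly j relu_lip[of "y!j" "y'!j"] by (simp add: relu_nth A_def)
      qed
      show "0 \<le> (W0*R+W0+1)*(X+1) - 1" "0 \<le> (W0*R+W0+1)*D + (W0*R+W0+1)*\<delta>*(X+1)" using X1 D1 by (auto simp: A_def)
    qed
    have "(A*D + A*\<delta>*(X+1)) + length rest * \<delta> * ((A*(X+1) - 1)+1) = A * (D + (1 + length rest) * \<delta> * (X+1))"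
      by (simp add: algebra_simps)
    hence EQ: "A^length rest * ((A*D + A*\<delta>*(X+1)) + length rest * \<delta> * ((A*(X+1) - 1)+1)) = A^length (wb#rest) * (D + length (wb#rest) * \<delta> * (X+1))"
      by (simp add: mult.assoc mult.left_commute)
    have Nl: "N!length(wb#rest) = (n1#Ns)!length rest" by (simp add: N)
    show ?thesis unfolding A_def[symmetric] e1 e2 EQ[symmetric] Nl using IH by blast
  qed
qed




lemma member_le_sum_list_nonneg:
  fixes xs :: "real list"
  assumes "\<forall>a\<in>set xs. 0 \<le> a" "i < length xs"
  shows "xs!i \<le> sum_list xs"
  using assms
proof (induction xs arbitrary: i)
  case Nil thus ?case by simp
next
  case (Cons a xs) thus ?case
    by (cases i) (auto intro: add_increasing2 add_increasing sum_list_nonneg)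
qed

lemma lq_vec_ge: assumes "0 < s" "i < length x" shows "\<bar>x!i\<bar> \<le> lq_vec s x"
proof -
  have "\<bar>x!i\<bar> powr s \<le> sum_list (map (\<lambda>a. \<bar>a\<bar> powr s) x)"
    using member_le_sum_list_nonneg[of "map (\<lambda>a. \<bar>a\<bar> powr s) x" i] assms by auto
  hence "(\<bar>x!i\<bar> powr s) powr (1/s) \<le> sum_list (map (\<lambda>a. \<bar>a\<bar> powr s) x) powr (1/s)"
    using assms by (intro powr_mono2) auto
  thus ?thesis using assms by (simp add: lq_vec_def powr_powr)
qed

lemma sum_list_le_len_mult: fixes xs :: "real list" shows "(\<forall>a\<in>set xs. a \<le> B) \<Longrightarrow> sum_list xs \<le> real (length xs) * B"
  by (induction xs) (auto simp: algebra_simps)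

lemma lq_vec_le: fixes B s :: real assumes "1 \<le> s" "\<forall>a\<in>set x. \<bar>a\<bar> \<le> B" "0 \<le> B" shows "lq_vec s x \<le> (length x + 1) * B"
proof -
  have "sum_list (map (\<lambda>a. \<bar>a\<bar> powr s) x) \<le> real (length x) * B powr s"
  proof -
    have "\<forall>a\<in>set x. \<bar>a\<bar> powr s \<le> B powr s" using assms by (auto intro: powr_mono2)
    thus ?thesis using sum_list_le_len_mult[where xs="map (\<lambda>a. \<bar>a\<bar> powr s) x" and B="B powr s"] by simp
  qed
  also have "\<dots> \<le> real (length x + 1) powr s * B powr s"
  proof -
    have "real (length x) \<le> real (length x + 1) powr 1" by simp
    also have "\<dots> \<le> real (length x + 1) powr s" using assms by (intro powr_mono) auto
    finally show ?thesis by (intro mult_right_mono) auto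
  qed
  also have "\<dots> = (real (length x + 1) * B) powr s" using assms by (simp add: powr_mult)
  finally have "sum_list (map (\<lambda>a. \<bar>a\<bar> powr s) x) powr (1/s) \<le> ((real (length x + 1) * B) powr s) powr (1/s)"
    using assms by (intro powr_mono2) (auto intro!: sum_list_nonneg)
  thus ?thesis using assms by (simp add: lq_vec_def powr_powr)
qed

lemma linf_vec_nonneg: "0 \<le> linf_vec x"
  by (induction x) (auto simp: linf_vec_def)

lemma linf_vec_ge: "i < length x \<Longrightarrow> \<bar>x!i\<bar> \<le> linf_vec x"
proof (induction x arbitrary: i)
  case Nil thus ?case by simp
next
  case (Cons a x) thus ?case by (cases i) (auto simp: linf_vec_def intro: le_max_iff_disj[THEN iffD2])
qed

lemma linf_vec_le: "\<forall>a\<in>set x. \<bar>a\<bar> \<le> B \<Longrightarrow> 0 \<le> B \<Longrightarrow> linf_vec x \<le> B"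
  by (induction x) (auto simp: linf_vec_def)

definition unitv :: "nat \<Rightarrow> nat \<Rightarrow> real list" where
  "unitv n j = map (\<lambda>k. if k = j then 1 else 0) [0..<n]"

lemma unitv_len[simp]: "length (unitv n j) = n" by (simp add: unitv_def)

lemma unitv_norm:
  assumes "j < n" "q = Lq s \<and> 1 \<le> s \<or> q = Linf"
  shows "qnorm_vec q (unitv n j) = 1"
  using assms(2)
proof
  assume q: "q = Lq s \<and> 1 \<le> s"
  have "map (\<lambda>a. \<bar>a\<bar> powr s) (unitv n j) = map (\<lambda>k. if k = j then 1 else 0) [0..<n]"
    using q by (auto simp: unitv_def)
  moreover have "sum_list (map (\<lambda>k. if k = j then 1 else 0) [0..<n]) = (1::real)"
    using assms(1) by (simp add: sum_list_map_eq_sum_count2 sum_list_sum_nth)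
  ultimately show ?thesis using q by (simp add: lq_vec_def)
next
  assume q: "q = Linf"
  have "linf_vec (unitv n j) \<le> 1" by (rule linf_vec_le) (auto simp: unitv_def)
  moreover have "\<bar>unitv n j ! j\<bar> \<le> linf_vec (unitv n j)" using assms(1) by (intro linf_vec_ge) simp
  ultimately show ?thesis using q assms(1) by (simp add: unitv_def)
qed

lemma mat_vec_unitv:
  assumes "i < length W" "length (W!i) = n" "j < n"
  shows "mat_vec W (unitv n j) ! i = W!i!j"
proof -
  have "mat_vec W (unitv n j) ! i = (\<Sum>k<n. W!i!k * unitv n j ! k)"
    using assms by (simp add: mat_vec_nth sum_list_map2_mult)
  also have "\<dots> = (\<Sum>k<n. if k = j then W!i!j else 0)"
    by (rule sum.cong) (auto simp: unitv_def)
  also have "\<dots> = W!i!j" using assms by simp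
  finally show ?thesis .
qed




lemma qnorm_ge:
  fixes x :: "real list" and s :: real
  assumes q: "q = Lq s \<and> 1 \<le> s \<or> q = Linf" and "i < length x"
  shows "\<bar>x!i\<bar> \<le> qnorm_vec q x"
  using q assms(2) lq_vec_ge[where s=s and x=x and i=i] linf_vec_ge[where x=x and i=i] by auto

lemma qnorm_le:
  fixes x :: "real list" and s B :: real
  assumes q: "q = Lq s \<and> 1 \<le> s \<or> q = Linf" and "\<forall>a\<in>set x. \<bar>a\<bar> \<le> B" "0 \<le> B"
  shows "qnorm_vec q x \<le> (length x + 1) * B"
  using q
proof
  assume "q = Lq s \<and> 1 \<le> s" thus ?thesis using lq_vec_le[of s x B] assms by auto
next
  assume "q = Linf"
  hence "qnorm_vec q x \<le> B" using linf_vec_le[of x B] assms by auto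
  also have "B \<le> (length x + 1) * B" using assms by (simp add: algebra_simps)
  finally show ?thesis .
qed

lemma op_norm_entry:
  assumes q: "q = Lq s \<and> 1 \<le> s \<or> q = Linf" and rows: "\<forall>row\<in>set W. length row = n"
    and i: "i < length W" and j: "j < n"
  shows "\<bar>W!i!j\<bar> \<le> op_norm q n W"
proof -
  define S where "S = {qnorm_vec q (mat_vec W x) | x. length x = n \<and> qnorm_vec q x \<le> 1}"
  have mem: "qnorm_vec q (mat_vec W (unitv n j)) \<in> S"
    unfolding S_def using unitv_norm[OF j q] by auto
  have li: "length (W!i) = n" using rows i by auto
  have "\<bar>W!i!j\<bar> = \<bar>mat_vec W (unitv n j) ! i\<bar>" using mat_vec_unitv[OF i li j] by simp
  also have "\<dots> \<le> qnorm_vec q (mat_vec W (unitv n j))" using qnorm_ge[OF q] i by simp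
  finally have e: "\<bar>W!i!j\<bar> \<le> qnorm_vec q (mat_vec W (unitv n j))" .
  define Bw where "Bw = sum_list (map (\<lambda>row. sum_list (map abs row)) W)"
  have Bw0: "0 \<le> Bw" unfolding Bw_def by (auto intro!: sum_list_nonneg)
  have "bdd_above S"
  proof (rule bdd_aboveI)
    fix v assume "v \<in> S"
    then obtain x where x: "length x = n" "qnorm_vec q x \<le> 1" and v: "v = qnorm_vec q (mat_vec W x)"
      unfolding S_def by auto
    have xk: "\<bar>x!k\<bar> \<le> 1" if "k < n" for k using qnorm_ge[OF q, of k x] x that by simp
    have "\<forall>a\<in>set (mat_vec W x). \<bar>a\<bar> \<le> Bw"
    proof
      fix a assume "a \<in> set (mat_vec W x)"
      then obtain i' where i': "i' < length W" "a = mat_vec W x ! i'" by (auto simp: in_set_conv_nth)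
      have li': "length (W!i') = n" using rows i' by auto
      have "a = (\<Sum>k<n. W!i'!k * x!k)" using i' li' x by (simp add: mat_vec_nth sum_list_map2_mult)
      hence "\<bar>a\<bar> \<le> (\<Sum>k<n. \<bar>W!i'!k * x!k\<bar>)" by (simp add: sum_abs)
      also have "\<dots> \<le> (\<Sum>k<n. \<bar>W!i'!k\<bar>)"
        by (rule sum_mono) (use xk in \<open>auto simp: abs_mult intro: mult_left_le\<close>)
      also have "\<dots> = sum_list (map abs (W!i'))" using li' by (simp add: sum_list_sum_nth lessThan_atLeast0)
      also have "\<dots> \<le> Bw"
      proof -
        have "\<forall>x\<in>set W. 0 \<le> sum_list (map abs x)" by (auto intro!: sum_list_nonneg)
        thus ?thesis unfolding Bw_def
          using member_le_sum_list_nonneg[of "map (\<lambda>row. sum_list (map abs row)) W" i'] i' by auto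
      qed
      finally show "\<bar>a\<bar> \<le> Bw" .
    qed
    thus "v \<le> (length W + 1) * Bw" using qnorm_le[OF q _ Bw0, of "mat_vec W x"] v by simp
  qed
  hence "qnorm_vec q (mat_vec W (unitv n j)) \<le> Sup S" using mem by (simp add: cSup_upper)
  thus ?thesis using e unfolding op_norm_def S_def by linarith
qed

lemma frob_entry:
  assumes "i < length W" "j < length (W!i)"
  shows "\<bar>W!i!j\<bar> \<le> frob_norm W"
proof -
  have "(W!i!j)^2 \<le> sum_list (map (\<lambda>a. a^2) (W!i))"
    using member_le_sum_list_nonneg[of "map (\<lambda>a. a^2) (W!i)" j] assms by auto
  also have "\<dots> \<le> sum_list (map (\<lambda>row. sum_list (map (\<lambda>a. a\<^sup>2) row)) W)"
  proof -
    have "\<forall>x\<in>set W. 0 \<le> sum_list (map (\<lambda>a. a\<^sup>2) x)" by (auto intro!: sum_list_nonneg)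
    thus ?thesis using member_le_sum_list_nonneg[of "map (\<lambda>row. sum_list (map (\<lambda>a. a\<^sup>2) row)) W" i] assms by auto
  qed
  finally have "sqrt ((W!i!j)^2) \<le> frob_norm W" unfolding frob_norm_def by (rule real_sqrt_le_mono)
  thus ?thesis by simp
qed

lemma param_entry_bound:
  assumes P: "params_of_arch N \<theta>" and B: "in_param_ball q N R \<theta>" and V: "valid_kind q"
    and l: "l < length \<theta>" and i: "i < N!Suc l"
  shows "j < N!l \<Longrightarrow> \<bar>fst (\<theta>!l)!i!j\<bar> \<le> R" and "\<bar>snd (\<theta>!l)!i\<bar> \<le> R"
proof -
  have sh: "length (fst (\<theta>!l)) = N!Suc l" "\<forall>row\<in>set (fst (\<theta>!l)). length row = N!l" "length (snd (\<theta>!l)) = N!Suc l"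
    using P l unfolding params_of_arch_def by auto
  have iW: "i < length (fst (\<theta>!l))" "i < length (snd (\<theta>!l))" using sh i by auto
  have rowl: "length (fst (\<theta>!l) ! i) = N!l" using sh iW by auto
  have Bl: "case q of Frob \<Rightarrow> frob_norm (fst (\<theta> ! l)) \<le> R \<and> lq_vec 2 (snd (\<theta> ! l)) \<le> R
      | Maxent \<Rightarrow> (\<forall>row \<in> set (fst (\<theta> ! l)). \<forall>a \<in> set row. \<bar>a\<bar> \<le> R) \<and> (\<forall>a \<in> set (snd (\<theta> ! l)). \<bar>a\<bar> \<le> R)
      | _ \<Rightarrow> op_norm q (N ! l) (fst (\<theta> ! l)) \<le> R \<and> qnorm_vec q (snd (\<theta> ! l)) \<le> R"
    using B l unfolding in_param_ball_def by auto
  have "(j < N!l \<longrightarrow> \<bar>fst (\<theta>!l)!i!j\<bar> \<le> R) \<and> \<bar>snd (\<theta>!l)!i\<bar> \<le> R"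
  proof (cases q)
    case (Lq s)
    hence q: "q = Lq s \<and> 1 \<le> s \<or> q = Linf" using V by (simp add: valid_kind_def)
    show ?thesis using Bl Lq op_norm_entry[OF q sh(2) iW(1), of j] qnorm_ge[OF q iW(2)] by auto
  next
    case Linf
    hence q: "q = Lq 1 \<and> 1 \<le> (1::real) \<or> q = Linf" by simp
    show ?thesis using Bl Linf op_norm_entry[OF q sh(2) iW(1), of j] qnorm_ge[OF q iW(2)] by auto
  next
    case Frob
    show ?thesis using Bl Frob frob_entry[OF iW(1), of j] rowl lq_vec_ge[where s=2 and x="snd (\<theta>!l)" and i=i] iW by auto
  next
    case Maxent
    have "fst (\<theta>!l) ! i \<in> set (fst (\<theta>!l))" using iW by simp
    moreover have "j < N!l \<Longrightarrow> fst (\<theta>!l) ! i ! j \<in> set (fst (\<theta>!l) ! i)" using rowl by simp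
    moreover have "\<forall>a\<in>set (fst (\<theta>!l) ! i). \<bar>a\<bar> \<le> R" using Bl Maxent nth_mem[OF iW(1)] by auto
    moreover have "\<bar>snd (\<theta>!l) ! i\<bar> \<le> R" using Bl Maxent nth_mem[OF iW(2)] by auto
    ultimately show ?thesis by blast
  qed
  thus "j < N!l \<Longrightarrow> \<bar>fst (\<theta>!l)!i!j\<bar> \<le> R" and "\<bar>snd (\<theta>!l)!i\<bar> \<le> R" by auto
qed




lemma lp_bound:
  fixes \<mu> :: "(real ^ 'i) measure" and nrm :: "'b::real_vector \<Rightarrow> real"
  assumes sets: "sets \<mu> = sets (restrict_space borel (space \<mu>))" and p1: "1 \<le> p"
    and Cp: "C_p \<mu> p < top" and c: "0 \<le> c"
    and pt: "\<And>x. 0 \<le> nrm (f x - g x) \<and> nrm (f x - g x) \<le> c * (infnorm x + 1)"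
  shows "lp_dist \<mu> p nrm f g \<le> ennreal (c * (enn2real (C_p \<mu> p) + 2))"
proof (cases "p = top")
  case True
  define s where "s = C_p \<mu> p"
  have s_eq: "s = Inf {c. AE x in \<mu>. ennreal (infnorm x) \<le> c}"
    using True by (simp add: s_def C_p_def ess_sup_enn_def)
  have sfin: "s = ennreal (enn2real s)" using Cp s_def by (simp add: ennreal_enn2real_if)
  have "s < ennreal (enn2real s + 1)" using sfin
    by (metis ennreal_lessI enn2real_nonneg less_add_one add_nonneg_pos zero_less_one)
  then obtain c0 where c0: "AE x in \<mu>. ennreal (infnorm x) \<le> c0" "c0 < ennreal (enn2real s + 1)"
    unfolding s_eq Inf_less_iff by auto
  have "AE x in \<mu>. ennreal (nrm (f x - g x)) \<le> ennreal (c * (enn2real s + 2))"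
    using c0(1)
  proof eventually_elim
    case (elim x)
    hence "ennreal (infnorm x) \<le> ennreal (enn2real s + 1)" using c0(2) by simp
    hence "infnorm x \<le> enn2real s + 1" by (metis ennreal_le_iff enn2real_nonneg add_nonneg_nonneg zero_le_one)
    hence "nrm (f x - g x) \<le> c * (enn2real s + 2)"
    proof -
      have "c * (infnorm x + 1) \<le> c * (enn2real s + 2)" using \<open>infnorm x \<le> enn2real s + 1\<close> c
        by (intro mult_left_mono) auto
      thus ?thesis using pt[of x] by linarith
    qed
    thus ?case by (simp add: ennreal_leI)
  qed
  thus ?thesis using True unfolding lp_dist_def lp_norm_enn_def ess_sup_enn_def s_def
    by (auto intro: Inf_lower)
next
  case False
  define pr where "pr = enn2real p"
  have p_eq: "p = ennreal pr" using False pr_def by (simp add: ennreal_enn2real_if)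
  have pr1: "1 \<le> pr" using p1 p_eq by (simp add: ennreal_le_iff[symmetric])
  define h where "h = (\<lambda>x::real^'i. infnorm x + 1)"
  have hcont: "continuous_on UNIV h" unfolding h_def
    by (intro continuous_intros continuous_on_infnorm)
  have hmb: "h \<in> borel_measurable borel" by (rule borel_measurable_continuous_onI[OF hcont])
  have hmu: "h \<in> borel_measurable \<mu>"
    unfolding measurable_cong_sets[OF sets refl, of borel] by (rule measurable_restrict_space1[OF hmb])
  have hpm: "(\<lambda>x. ennreal (h x powr pr)) \<in> borel_measurable \<mu>"
    by (rule measurable_compose[OF hmu]) measurable
  define Ih where "Ih = (\<integral>\<^sup>+ x. ennreal (h x powr pr) \<partial>\<mu>)"
  define Ig where "Ig = (\<integral>\<^sup>+ x. ennreal (nrm (f x - g x) powr pr) \<partial>\<mu>)"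
  have Cpe: "C_p \<mu> p = (if Ih = top then top else ennreal (enn2real Ih powr (1 / pr)))"
    using False unfolding C_p_def lp_norm_enn_def Ih_def h_def pr_def by (simp add: Let_def)
  have Ihf: "Ih \<noteq> top" using Cp Cpe by (auto split: if_splits)
  have "Ig \<le> (\<integral>\<^sup>+ x. ennreal (c powr pr) * ennreal (h x powr pr) \<partial>\<mu>)"
    unfolding Ig_def
  proof (rule nn_integral_mono)
    fix x
    have "nrm (f x - g x) powr pr \<le> (c * h x) powr pr"
      using pt[of x] pr1 by (intro powr_mono2) (auto simp: h_def)
    also have "\<dots> = c powr pr * h x powr pr" using c by (simp add: powr_mult h_def)
    finally show "ennreal (nrm (f x - g x) powr pr) \<le> ennreal (c powr pr) * ennreal (h x powr pr)"
      by (simp add: ennreal_mult'[symmetric] ennreal_leI)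
  qed
  also have "\<dots> = ennreal (c powr pr) * Ih" unfolding Ih_def by (rule nn_integral_cmult[OF hpm])
  finally have IgIh: "Ig \<le> ennreal (c powr pr) * Ih" .
  have Ihr: "Ih = ennreal (enn2real Ih)" using Ihf by (simp add: ennreal_enn2real_if)
  have prod: "ennreal (c powr pr) * Ih = ennreal (c powr pr * enn2real Ih)"
    by (subst Ihr) (simp add: ennreal_mult)
  have IgIh2: "Ig \<le> ennreal (c powr pr * enn2real Ih)" using IgIh prod by simp
  have Igf: "Ig \<noteq> top" using IgIh2 by (rule neq_top_trans[rotated]) simp
  have Igr: "enn2real Ig \<le> c powr pr * enn2real Ih"
  proof -
    have "enn2real Ig \<le> enn2real (ennreal (c powr pr * enn2real Ih))"
      using IgIh2 by (rule enn2real_mono) simp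
    thus ?thesis by simp
  qed
  have "enn2real Ig powr (1/pr) \<le> (c powr pr * enn2real Ih) powr (1/pr)"
    using Igr pr1 by (intro powr_mono2) auto
  also have "\<dots> = c * enn2real Ih powr (1/pr)"
    using c pr1 by (simp add: powr_mult powr_powr)
  also have "\<dots> \<le> c * (enn2real (C_p \<mu> p) + 2)"
    using Cpe Ihf c by (auto intro!: mult_left_mono)
  finally have fin: "enn2real Ig powr (1/pr) \<le> c * (enn2real (C_p \<mu> p) + 2)" .
  have "lp_dist \<mu> p nrm f g = ennreal (enn2real Ig powr (1/pr))"
    using False Igf unfolding lp_dist_def lp_norm_enn_def Ig_def pr_def by (simp add: Let_def)
  thus ?thesis using fin by (simp add: ennreal_leI)
qed




lemma enum_bij: "bij_betw (enum_idx :: nat \<Rightarrow> 'a::finite) {..<CARD('a)} UNIV"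
  unfolding enum_idx_def
  using someI_ex[OF ex_bij_betw_nat_finite[of "UNIV::'a set"]] by (simp add: lessThan_atLeast0)

lemma vec_to_list_len[simp]: "length (vec_to_list (x :: real^'i)) = CARD('i)"
  by (simp add: vec_to_list_def)

lemma vec_to_list_nth: "k < CARD('i) \<Longrightarrow> vec_to_list (x :: real^'i) ! k = x $ enum_idx k"
  by (simp add: vec_to_list_def)

lemma list_to_vec_nth:
  "\<exists>k < CARD('o). \<forall>y. (list_to_vec y :: real^'o) $ j = y ! k"
proof -
  have "j \<in> enum_idx ` {..<CARD('o)}" using enum_bij[where 'a='o] by (simp add: bij_betw_def)
  hence "inv_into {..<CARD('o)} enum_idx j \<in> {..<CARD('o)}" by (rule inv_into_into)
  thus ?thesis by (auto simp: list_to_vec_def)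
qed

lemma norm_fun_props:
  assumes "is_norm_fun nrm"
  shows "nrm 0 = 0" "\<And>x. nrm (-x) = nrm x" "\<And>x. 0 \<le> nrm x"
proof -
  show z: "nrm 0 = 0" using assms unfolding is_norm_fun_def by auto
  show n: "\<And>x. nrm (-x) = nrm x"
  proof -
    fix x
    have "nrm ((-1) *\<^sub>R x) = \<bar>-1\<bar> * nrm x" using assms unfolding is_norm_fun_def by blast
    thus "nrm (-x) = nrm x" by simp
  qed
  fix x
  have "nrm (x + -x) \<le> nrm x + nrm (-x)" using assms unfolding is_norm_fun_def by blast
  thus "0 \<le> nrm x" using z n[of x] by simp
qed

lemma norm_fun_sum:
  assumes "is_norm_fun nrm" "finite A"
  shows "nrm (\<Sum>a\<in>A. f a) \<le> (\<Sum>a\<in>A. nrm (f a))"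
  using assms(2)
proof (induction A rule: finite_induct)
  case empty thus ?case using norm_fun_props[OF assms(1)] by simp
next
  case (insert a A)
  have "nrm (f a + sum f A) \<le> nrm (f a) + nrm (sum f A)" using assms(1) unfolding is_norm_fun_def by blast
  thus ?case using insert by simp
qed

lemma norm_fun_bound:
  fixes nrm :: "real^'o \<Rightarrow> real"
  assumes nf: "is_norm_fun nrm" and b: "\<And>j. \<bar>v $ j\<bar> \<le> B"
  shows "nrm v \<le> (\<Sum>j\<in>UNIV. nrm (axis j 1)) * B"
proof -
  have "v = (\<Sum>j\<in>UNIV. v $ j *\<^sub>R axis j 1)" using basis_expansion[of v] by (simp add: scalar_mult_eq_scaleR)
  hence "nrm v = nrm (\<Sum>j\<in>UNIV. v $ j *\<^sub>R axis j 1)" by simp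
  also have "\<dots> \<le> (\<Sum>j\<in>UNIV. nrm (v $ j *\<^sub>R axis j 1))" by (rule norm_fun_sum[OF nf]) simp
  also have "\<dots> = (\<Sum>j\<in>UNIV. \<bar>v $ j\<bar> * nrm (axis j 1))" using nf unfolding is_norm_fun_def by simp
  also have "\<dots> \<le> (\<Sum>j\<in>UNIV. B * nrm (axis j 1))"
    by (rule sum_mono) (use b norm_fun_props(3)[OF nf] in \<open>auto intro: mult_right_mono\<close>)
  also have "\<dots> = (\<Sum>j\<in>UNIV. nrm (axis j 1)) * B" by (metis sum_distrib_left mult.commute)
  finally show ?thesis .
qed

lemma realization_lip:
  fixes \<theta> \<theta>' :: "(real list list \<times> real list) list" and W0 R \<delta> :: real and nrm :: "real^'o \<Rightarrow> real"
  assumes nf: "is_norm_fun nrm" and W0: "1 \<le> W0" and R: "0 \<le> R" and dl: "0 \<le> \<delta>"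
    and len: "length \<theta>' = length \<theta>" "length N = length \<theta> + 1"
    and ok: "\<forall>l<length \<theta>. lyr_ok (N!l) (N!Suc l) R \<delta> (\<theta>!l) (\<theta>'!l)"
    and wid: "\<forall>l<length N. real (N!l) \<le> W0"
    and N0: "N!0 = CARD('i)" and NL: "N!length \<theta> = CARD('o)"
  shows "nrm ((realization \<theta> x :: real^'o) - realization \<theta>' (x :: real^'i))
     \<le> (\<Sum>j\<in>UNIV. nrm (axis j 1)) * ((W0*R+W0+1)^length \<theta> * (length \<theta> * \<delta> * (infnorm x + 1)))"
proof -
  define xl where "xl = vec_to_list x"
  have xb: "\<forall>j<N!0. \<bar>xl!j\<bar> \<le> infnorm x \<and> \<bar>xl!j - xl!j\<bar> \<le> 0"
    using N0 by (auto simp: xl_def vec_to_list_nth component_le_infnorm_cart)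
  have L: "length (net_eval \<theta> xl) = N!length \<theta> \<and> length (net_eval \<theta>' xl) = N!length \<theta> \<and>
    (\<forall>i<N!length \<theta>. \<bar>net_eval \<theta> xl!i - net_eval \<theta>' xl!i\<bar> \<le> (W0*R+W0+1)^length \<theta> * (0 + length \<theta> * \<delta> * (infnorm x+1)))"
    by (rule net_lip[OF W0 R dl len ok wid]) (use N0 xb in \<open>auto simp: xl_def infnorm_pos_le\<close>)
  show ?thesis
  proof (rule norm_fun_bound[OF nf])
    fix j :: 'o
    obtain k where k: "k < CARD('o)" "\<And>y. (list_to_vec y :: real^'o) $ j = y ! k"
      using list_to_vec_nth[of j] by blast
    show "\<bar>(realization \<theta> x - realization \<theta>' x) $ j\<bar> \<le> (W0*R+W0+1)^length \<theta> * (length \<theta> * \<delta> * (infnorm x + 1))"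
      using L k NL by (simp add: realization_def xl_def)
  qed
qed




lemma card_small_subsets:
  assumes "finite A"
  shows "card {S. S \<subseteq> A \<and> card S \<le> M} \<le> (M+1) * (card A + 1)^M"
proof -
  have eq: "{S. S \<subseteq> A \<and> card S \<le> M} = (\<Union>k\<in>{..M}. {S. S \<subseteq> A \<and> card S = k})" by auto
  have "card {S. S \<subseteq> A \<and> card S \<le> M} \<le> (\<Sum>k\<in>{..M}. card {S. S \<subseteq> A \<and> card S = k})"
    unfolding eq by (rule card_UN_le) simp
  also have "\<dots> \<le> (\<Sum>k\<in>{..M}. (card A + 1)^M)"
  proof (rule sum_mono)
    fix k assume k: "k \<in> {..M}"
    have "card {S. S \<subseteq> A \<and> card S = k} = card A choose k" by (rule n_subsets[OF assms])
    also have "\<dots> \<le> (card A + 1)^k"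
    proof (cases "k \<le> card A")
      case True
      hence "card A choose k \<le> card A ^ k" by (rule binomial_le_pow)
      also have "\<dots> \<le> (card A + 1)^k" by (simp add: power_mono)
      finally show ?thesis .
    next
      case False thus ?thesis by (simp add: binomial_eq_0)
    qed
    also have "\<dots> \<le> (card A + 1)^M" using k by (intro power_increasing) auto
    finally show "card {S. S \<subseteq> A \<and> card S = k} \<le> (card A + 1)^M" .
  qed
  also have "\<dots> = (M+1) * (card A + 1)^M" by simp
  finally show ?thesis .
qed

lemma card_lists_bound:
  "card {xs. set xs \<subseteq> {..W::nat} \<and> length xs \<le> n} \<le> (n+1) * (W+1)^n"
proof -
  have "card {xs. set xs \<subseteq> {..W::nat} \<and> length xs \<le> n} = (\<Sum>i\<le>n. (W+1)^i)"
    by (subst card_lists_length_le) auto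
  also have "\<dots> \<le> (\<Sum>i\<le>n. (W+1)^n)" by (intro sum_mono power_increasing) auto
  also have "\<dots> = (n+1) * (W+1)^n" by simp
  finally show ?thesis .
qed

lemma param_positions_sub:
  assumes "length N \<le> L + 1" "\<forall>l<length N. N!l \<le> W"
  shows "param_positions N \<subseteq> Inl ` ({..<L} \<times> {..<W} \<times> {..<W}) \<union> Inr ` ({..<L} \<times> {..<W})"
proof
  fix pos assume "pos \<in> param_positions N"
  then consider (a) l i j where "pos = Inl (l,i,j)" "l + 1 < length N" "i < N!Suc l" "j < N!l"
    | (b) l i where "pos = Inr (l,i)" "l + 1 < length N" "i < N!Suc l"
    unfolding param_positions_def by blast
  then show "pos \<in> Inl ` ({..<L} \<times> {..<W} \<times> {..<W}) \<union> Inr ` ({..<L} \<times> {..<W})"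
  proof cases
    case a
    have "N!Suc l \<le> W" "N!l \<le> W" using assms(2) a(2) by auto
    moreover have "l < L" using a(2) assms(1) by linarith
    ultimately show ?thesis using a by auto
  next
    case b
    have "N!Suc l \<le> W" using assms(2) b(2) by auto
    moreover have "l < L" using b(2) assms(1) by linarith
    ultimately show ?thesis using b by auto
  qed
qed

lemma param_positions_card:
  assumes "length N \<le> L + 1" "\<forall>l<length N. N!l \<le> W"
  shows "finite (param_positions N)" "card (param_positions N) \<le> L * (W+1)^2"
proof -
  let ?B = "Inl ` ({..<L} \<times> {..<W} \<times> {..<W}) \<union> Inr ` ({..<L} \<times> {..<W}) :: ((nat \<times> nat \<times> nat) + (nat \<times> nat)) set"
  have fB: "finite ?B" by simp
  show "finite (param_positions N)" using finite_subset[OF param_positions_sub[OF assms] fB] .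
  have "card (param_positions N) \<le> card ?B" by (rule card_mono[OF fB param_positions_sub[OF assms]])
  also have "\<dots> \<le> card (Inl ` ({..<L} \<times> {..<W} \<times> {..<W}) :: ((nat \<times> nat \<times> nat) + (nat \<times> nat)) set) + card (Inr ` ({..<L} \<times> {..<W}) :: ((nat \<times> nat \<times> nat) + (nat \<times> nat)) set)"
    by (rule card_Un_le)
  also have "\<dots> = L*(W*W) + L*W" by (simp add: card_image card_cartesian_product)
  also have "\<dots> \<le> L * (W+1)^2" by (simp add: power2_eq_square algebra_simps)
  finally show "card (param_positions N) \<le> L * (W+1)^2" .
qed




lemma floor_eq_close:
  fixes a b \<delta> :: real
  assumes "0 < \<delta>" "\<lfloor>a/\<delta>\<rfloor> = \<lfloor>b/\<delta>\<rfloor>"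
  shows "\<bar>a - b\<bar> \<le> \<delta>"
proof -
  have "real_of_int \<lfloor>a/\<delta>\<rfloor> \<le> a/\<delta>" "a/\<delta> < real_of_int \<lfloor>a/\<delta>\<rfloor> + 1"
       "real_of_int \<lfloor>b/\<delta>\<rfloor> \<le> b/\<delta>" "b/\<delta> < real_of_int \<lfloor>b/\<delta>\<rfloor> + 1"
    by (simp_all add: of_int_floor_le real_of_int_floor_add_one_gt)
  hence "\<bar>a/\<delta> - b/\<delta>\<bar> < 1" using assms(2) by linarith
  hence "\<bar>(a - b)/\<delta>\<bar> < 1" by (simp add: diff_divide_distrib)
  hence "\<bar>a - b\<bar> / \<delta> < 1" using assms(1) by simp
  thus ?thesis using assms(1) by (simp add: divide_less_eq)
qed

lemma floor_range:
  fixes e R \<delta> :: real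
  assumes "0 < \<delta>" "\<bar>e\<bar> \<le> R"
  shows "\<lfloor>e/\<delta>\<rfloor> \<in> {- int (nat \<lceil>R/\<delta>\<rceil>) .. int (nat \<lceil>R/\<delta>\<rceil>)}"
proof -
  have R0: "0 \<le> R/\<delta>" using assms by auto
  have c: "int (nat \<lceil>R/\<delta>\<rceil>) = \<lceil>R/\<delta>\<rceil>" using R0 by simp
  have "e \<le> R" "-R \<le> e" using assms by auto
  hence "e/\<delta> \<le> R/\<delta>" "-(R/\<delta>) \<le> e/\<delta>"
    using assms(1) divide_right_mono[of e R \<delta>] divide_right_mono[of "-R" e \<delta>] by auto
  hence 1: "\<lfloor>e/\<delta>\<rfloor> \<le> \<lfloor>R/\<delta>\<rfloor>" "\<lfloor>-(R/\<delta>)\<rfloor> \<le> \<lfloor>e/\<delta>\<rfloor>" by (simp_all add: floor_mono)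
  have 2: "\<lfloor>R/\<delta>\<rfloor> \<le> \<lceil>R/\<delta>\<rceil>" by (rule floor_le_ceiling)
  have 3: "\<lfloor>-(R/\<delta>)\<rfloor> = -\<lceil>R/\<delta>\<rceil>" by (simp add: ceiling_def)
  show ?thesis unfolding c atLeastAtMost_iff using 1 2 3 by linarith
qed




lemma cover_M:
  fixes \<mu> :: "(real ^ 'i) measure" and nrm :: "real ^ 'o \<Rightarrow> real" and q :: norm_kind
    and LM :: "nat \<Rightarrow> nat" and r :: "nat \<Rightarrow> real" and M :: nat and \<epsilon> :: real
  assumes sets: "sets \<mu> = sets (restrict_space borel (space \<mu>))" and p1: "1 \<le> p"
    and nf: "is_norm_fun nrm" and Cp: "C_p \<mu> p < top" and V: "valid_kind q"
    and R1: "1 \<le> r M" and M1: "1 \<le> M" and eps: "0 < \<epsilon>"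
  defines "W0n \<equiv> M + CARD('i) + CARD('o)"
    and "Cn \<equiv> (\<Sum>j\<in>UNIV. nrm (axis j 1 :: real^'o))"
  defines "K0 \<equiv> Cn * (enn2real (C_p \<mu> p) + 2) + 1"
    and "A \<equiv> real W0n * r M + real W0n + 1"
  defines "\<delta> \<equiv> \<epsilon> / (K0 * A ^ LM M * (LM M + 1))"
  defines "k \<equiv> nat \<lceil>r M / \<delta>\<rceil>"
  shows "\<exists>E. is_covering (lp_dist \<mu> p nrm) \<epsilon> E (relu_family q LM r M :: (real^'i \<Rightarrow> real^'o) set) \<and>
     card E \<le> ((LM M + 2) * (W0n+1)^(LM M+1)) * ((M+1) * (LM M * (W0n+1)^2 + 1)^M) * (2*k+1)^M"
proof -
  define L where "L = LM M"
  define R where "R = r M"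
  have W01: "1 \<le> real W0n" using M1 by (simp add: W0n_def)
  have R0: "0 \<le> R" using R1 by (simp add: R_def)
  have A1: "1 \<le> A" using W01 R0 by (simp add: A_def R_def)
  have Cn0: "0 \<le> Cn" unfolding Cn_def by (intro sum_nonneg) (use norm_fun_props(3)[OF nf] in auto)
  have K0: "1 \<le> K0" using Cn0 by (simp add: K0_def)
  have dpos: "0 < \<delta>" unfolding \<delta>_def using eps K0 A1 by (intro divide_pos_pos mult_pos_pos) auto
  define AN where "AN = {N::nat list. length N \<ge> 2 \<and> length N - 1 \<le> L \<and>
        N ! 0 = CARD('i) \<and> N ! (length N - 1) = CARD('o) \<and>
        (\<forall>l. 1 \<le> l \<and> l < length N - 1 \<longrightarrow> 1 \<le> N ! l \<and> N ! l \<le> M)}"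
  define Th where "Th = (\<lambda>N S. {\<theta>. params_of_arch N \<theta> \<and> in_param_ball q N R \<theta> \<and> vanishes_outside N \<theta> S})"
  define Q where "Q = {(N,S). N \<in> AN \<and> S \<subseteq> param_positions N \<and> card S \<le> M}"
  define cell where "cell = (\<lambda>S \<theta>. restrict (\<lambda>pos. \<lfloor>param_entry \<theta> pos / \<delta>\<rfloor>) S)"
  define C where "C = (\<lambda>N S. (\<lambda>\<theta>. cell S \<theta>) ` Th N S)"
  define rep where "rep = (\<lambda>N S c. SOME \<theta>. \<theta> \<in> Th N S \<and> cell S \<theta> = c)"
  define E :: "(real^'i \<Rightarrow> real^'o) set" where "E = (\<Union>(N,S)\<in>Q. (\<lambda>c. realization (rep N S c)) ` C N S)"
  have fam: "(relu_family q LM r M :: (real^'i \<Rightarrow> real^'o) set) = {realization \<theta> | \<theta> N S. (N,S) \<in> Q \<and> \<theta> \<in> Th N S}"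
    unfolding relu_family_def Q_def AN_def Th_def L_def R_def by auto
  have wid: "\<forall>l<length N. N!l \<le> W0n" if "N \<in> AN" for N
  proof (intro allI impI)
    fix l assume l: "l < length N"
    show "N!l \<le> W0n"
    proof (cases "l = 0")
      case True thus ?thesis using that by (simp add: AN_def W0n_def)
    next
      case False
      show ?thesis
      proof (cases "l = length N - 1")
        case True thus ?thesis using that by (simp add: AN_def W0n_def)
      next
        case False2: False
        hence "N!l \<le> M" using that l False unfolding AN_def by auto
        thus ?thesis by (simp add: W0n_def)
      qed
    qed
  qed
  have lenN: "length N \<le> L + 1" if "N \<in> AN" for N using that unfolding AN_def by auto
  have ANsub: "AN \<subseteq> {xs. set xs \<subseteq> {..W0n} \<and> length xs \<le> L + 1}"
  proof
    fix N assume N: "N \<in> AN"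
    have "set N \<subseteq> {..W0n}" using wid[OF N] by (auto simp: in_set_conv_nth)
    thus "N \<in> {xs. set xs \<subseteq> {..W0n} \<and> length xs \<le> L + 1}" using lenN[OF N] by auto
  qed
  have finAN: "finite AN" by (rule finite_subset[OF ANsub]) (simp add: finite_lists_length_le)
  have cardAN: "card AN \<le> (L + 2) * (W0n+1)^(L+1)"
  proof -
    have "card AN \<le> card {xs. set xs \<subseteq> {..W0n} \<and> length xs \<le> L + 1}"
      by (rule card_mono[OF _ ANsub]) (simp add: finite_lists_length_le)
    also have "\<dots> \<le> (L + 1 + 1) * (W0n+1)^(L+1)" by (rule card_lists_bound)
    finally show ?thesis by simp
  qed
  have ppc: "finite (param_positions N)" "card (param_positions N) \<le> L * (W0n+1)^2" if "N \<in> AN" for N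
    using param_positions_card[OF lenN[OF that] wid[OF that]] by auto
  define SS where "SS = (\<lambda>N. {S. S \<subseteq> param_positions N \<and> card S \<le> M})"
  have finSS: "finite (SS N)" if "N \<in> AN" for N using ppc[OF that] unfolding SS_def by auto
  have cardSS: "card (SS N) \<le> (M+1) * (L * (W0n+1)^2 + 1)^M" if "N \<in> AN" for N
  proof -
    have "card (SS N) \<le> (M+1) * (card (param_positions N) + 1)^M"
      unfolding SS_def by (rule card_small_subsets[OF ppc(1)[OF that]])
    also have "\<dots> \<le> (M+1) * (L * (W0n+1)^2 + 1)^M"
      using ppc(2)[OF that] by (intro mult_left_mono power_mono) auto
    finally show ?thesis .
  qed
  have Qsub: "Q = Sigma AN SS" unfolding Q_def SS_def by auto
  have finQ: "finite Q" unfolding Qsub using finAN finSS by auto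
  have cardQ: "card Q \<le> card AN * ((M+1) * (L * (W0n+1)^2 + 1)^M)"
  proof -
    have "card Q = (\<Sum>N\<in>AN. card (SS N))" unfolding Qsub using finAN finSS by (simp add: card_SigmaI)
    also have "\<dots> \<le> (\<Sum>N\<in>AN. (M+1) * (L * (W0n+1)^2 + 1)^M)" by (rule sum_mono) (use cardSS in auto)
    also have "\<dots> = card AN * ((M+1) * (L * (W0n+1)^2 + 1)^M)" by simp
    finally show ?thesis .
  qed
  have entry: "\<bar>param_entry \<theta> pos\<bar> \<le> R" if th: "\<theta> \<in> Th N S" and pos: "pos \<in> param_positions N" for \<theta> N S pos
  proof -
    have P: "params_of_arch N \<theta>" and B: "in_param_ball q N R \<theta>" using th by (auto simp: Th_def)
    have lt: "length \<theta> + 1 = length N" using P by (simp add: params_of_arch_def)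
    from pos consider (a) l i j where "pos = Inl (l,i,j)" "l + 1 < length N" "i < N!Suc l" "j < N!l"
      | (b) l i where "pos = Inr (l,i)" "l + 1 < length N" "i < N!Suc l"
      unfolding param_positions_def by blast
    thus ?thesis
    proof cases
      case a
      have "l < length \<theta>" using a lt by simp
      thus ?thesis using param_entry_bound(1)[OF P B V _ a(3) a(4)] a by simp
    next
      case b
      have "l < length \<theta>" using b lt by simp
      thus ?thesis using param_entry_bound(2)[OF P B V _ b(3)] b by simp
    qed
  qed
  have Csub: "C N S \<subseteq> PiE S (\<lambda>_. {- int k .. int k})" if "S \<subseteq> param_positions N" for N S
  proof
    fix c assume "c \<in> C N S"
    then obtain \<theta> where th: "\<theta> \<in> Th N S" and c: "c = cell S \<theta>" unfolding C_def by auto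
    have "\<forall>pos\<in>S. \<lfloor>param_entry \<theta> pos / \<delta>\<rfloor> \<in> {- int k .. int k}"
    proof
      fix pos assume "pos \<in> S"
      hence "pos \<in> param_positions N" using that by auto
      from floor_range[OF dpos entry[OF th this]]
      show "\<lfloor>param_entry \<theta> pos / \<delta>\<rfloor> \<in> {- int k .. int k}" by (simp add: k_def R_def)
    qed
    thus "c \<in> PiE S (\<lambda>_. {- int k .. int k})"
      unfolding c cell_def by (simp add: restrict_PiE_iff)
  qed
  have cardC: "card (C N S) \<le> (2*k+1)^M" if "(N,S) \<in> Q" for N S
  proof -
    have S: "S \<subseteq> param_positions N" "card S \<le> M" "N \<in> AN" using that by (auto simp: Q_def)
    have finS: "finite S" using finite_subset[OF S(1) ppc(1)[OF S(3)]] .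
    have "card (C N S) \<le> card (PiE S (\<lambda>_. {- int k .. int k}))"
      by (rule card_mono[OF _ Csub[OF S(1)]]) (simp add: finite_PiE finS)
    also have "\<dots> = (2*k+1)^card S"
    proof -
      have "nat (2 * int k + 1) = 2*k+1" by (simp add: nat_add_distrib nat_mult_distrib)
      thus ?thesis using finS by (simp add: card_PiE)
    qed
    also have "\<dots> \<le> (2*k+1)^M" using S(2) by (intro power_increasing) auto
    finally show ?thesis .
  qed
  have finC: "finite (C N S)" if "(N,S) \<in> Q" for N S
  proof -
    have S: "S \<subseteq> param_positions N" "N \<in> AN" using that by (auto simp: Q_def)
    have finS: "finite S" using finite_subset[OF S(1) ppc(1)[OF S(2)]] .
    show ?thesis by (rule finite_subset[OF Csub[OF S(1)]]) (simp add: finite_PiE finS)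
  qed
  have cardE: "card E \<le> card Q * (2*k+1)^M"
  proof -
    have "card E \<le> (\<Sum>NS\<in>Q. card ((\<lambda>c. realization (rep (fst NS) (snd NS) c) :: real^'i \<Rightarrow> real^'o) ` C (fst NS) (snd NS)))"
      unfolding E_def case_prod_beta by (rule card_UN_le[OF finQ])
    also have "\<dots> \<le> (\<Sum>NS\<in>Q. (2*k+1)^M)"
    proof (rule sum_mono)
      fix NS assume "NS \<in> Q"
      hence "(fst NS, snd NS) \<in> Q" by simp
      thus "card ((\<lambda>c. realization (rep (fst NS) (snd NS) c) :: real^'i \<Rightarrow> real^'o) ` C (fst NS) (snd NS)) \<le> (2*k+1)^M"
        using cardC card_image_le finC le_trans by blast
    qed
    also have "\<dots> = card Q * (2*k+1)^M" by simp
    finally show ?thesis .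
  qed
  have repP: "rep N S (cell S \<theta>) \<in> Th N S \<and> cell S (rep N S (cell S \<theta>)) = cell S \<theta>" if "\<theta> \<in> Th N S" for N S \<theta>
    unfolding rep_def by (rule someI_ex) (use that in blast)
  have Esub: "E \<subseteq> relu_family q LM r M"
  proof
    fix g assume "g \<in> E"
    then obtain N S c where NS: "(N,S) \<in> Q" and c: "c \<in> C N S" and g: "g = realization (rep N S c)"
      unfolding E_def by auto
    obtain \<theta> where th: "\<theta> \<in> Th N S" and "c = cell S \<theta>" using c unfolding C_def by auto
    hence "rep N S c \<in> Th N S" using repP by auto
    thus "g \<in> relu_family q LM r M" unfolding fam using NS g by blast
  qed
  have dist: "lp_dist \<mu> p nrm (realization \<theta>) (realization (rep N S (cell S \<theta>))) \<le> ennreal \<epsilon>"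
    if NS: "(N,S) \<in> Q" and th: "\<theta> \<in> Th N S" for N S \<theta>
  proof -
    define \<theta>' where "\<theta>' = rep N S (cell S \<theta>)"
    have th': "\<theta>' \<in> Th N S" and ce: "cell S \<theta>' = cell S \<theta>" using repP[OF th] by (auto simp: \<theta>'_def)
    have NA: "N \<in> AN" and Ssub: "S \<subseteq> param_positions N" using NS by (auto simp: Q_def)
    have P: "params_of_arch N \<theta>" "params_of_arch N \<theta>'" using th th' by (auto simp: Th_def)
    have van: "vanishes_outside N \<theta> S" "vanishes_outside N \<theta>' S" using th th' by (auto simp: Th_def)
    have diff: "\<bar>param_entry \<theta> pos - param_entry \<theta>' pos\<bar> \<le> \<delta>" if pos: "pos \<in> param_positions N" for pos
    proof (cases "pos \<in> S")
      case True
      have "cell S \<theta> pos = cell S \<theta>' pos" using ce by simp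
      hence "\<lfloor>param_entry \<theta> pos / \<delta>\<rfloor> = \<lfloor>param_entry \<theta>' pos / \<delta>\<rfloor>" using True by (simp add: cell_def)
      thus ?thesis by (rule floor_eq_close[OF dpos])
    next
      case False
      hence "param_entry \<theta> pos = 0" "param_entry \<theta>' pos = 0" using van pos by (auto simp: vanishes_outside_def)
      thus ?thesis using dpos by simp
    qed
    have lt: "length \<theta> + 1 = length N" "length \<theta>' + 1 = length N" using P by (auto simp: params_of_arch_def)
    have ok: "\<forall>l<length \<theta>. lyr_ok (N!l) (N!Suc l) R \<delta> (\<theta>!l) (\<theta>'!l)"
    proof (intro allI impI)
      fix l assume l: "l < length \<theta>"
      have l': "l < length \<theta>'" using l lt by simp
      have l1: "l + 1 < length N" using l lt by simp
      have sh: "length (fst (\<theta>!l)) = N!Suc l" "\<forall>row\<in>set (fst (\<theta>!l)). length row = N!l" "length (snd (\<theta>!l)) = N!Suc l"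
        using P(1) l unfolding params_of_arch_def by auto
      have sh': "length (fst (\<theta>'!l)) = N!Suc l" "\<forall>row\<in>set (fst (\<theta>'!l)). length row = N!l" "length (snd (\<theta>'!l)) = N!Suc l"
        using P(2) l' unfolding params_of_arch_def by auto
      show "lyr_ok (N!l) (N!Suc l) R \<delta> (\<theta>!l) (\<theta>'!l)"
        unfolding lyr_ok_def
      proof (intro conjI allI impI)
        fix i assume i: "i < N!Suc l"
        show "length (fst (\<theta>!l) ! i) = N!l" using sh i by auto
        show "length (fst (\<theta>'!l) ! i) = N!l" using sh' i by auto
        have posb: "Inr (l,i) \<in> param_positions N" using l1 i by (auto simp: param_positions_def)
        show "\<bar>snd (\<theta>!l) ! i\<bar> \<le> R" using entry[OF th posb] by simp
        show "\<bar>snd (\<theta>!l) ! i - snd (\<theta>'!l) ! i\<bar> \<le> \<delta>" using diff[OF posb] by simp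
        fix j assume j: "j < N!l"
        have posw: "Inl (l,i,j) \<in> param_positions N" using l1 i j by (auto simp: param_positions_def)
        show "\<bar>fst (\<theta>!l) ! i ! j\<bar> \<le> R" using entry[OF th posw] by simp
        show "\<bar>fst (\<theta>'!l) ! i ! j\<bar> \<le> R" using entry[OF th' posw] by simp
        show "\<bar>fst (\<theta>!l) ! i ! j - fst (\<theta>'!l) ! i ! j\<bar> \<le> \<delta>" using diff[OF posw] by simp
      qed (use sh sh' in auto)
    qed
    have wid': "\<forall>l<length N. real (N!l) \<le> real W0n" using wid[OF NA] by simp
    have N0: "N!0 = CARD('i)" using NA unfolding AN_def by auto
    have "length \<theta> = length N - 1" using lt by simp
    hence NL: "N!length \<theta> = CARD('o)" using NA unfolding AN_def by auto
    have lenth: "length \<theta> \<le> L" using lt lenN[OF NA] by simp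
    define c where "c = Cn * A^L * (L+1) * \<delta>"
    have c0: "0 \<le> c" unfolding c_def using Cn0 A1 dpos by simp
    have pt: "0 \<le> nrm (realization \<theta> x - realization \<theta>' x) \<and> nrm (realization \<theta> x - realization \<theta>' x) \<le> c * (infnorm x + 1)"
      for x :: "real^'i"
    proof
      show "0 \<le> nrm (realization \<theta> x - realization \<theta>' x)" by (rule norm_fun_props(3)[OF nf])
      have "nrm (realization \<theta> x - realization \<theta>' x) \<le> Cn * (A^length \<theta> * (length \<theta> * \<delta> * (infnorm x + 1)))"
        unfolding Cn_def A_def R_def[symmetric]
        by (rule realization_lip[OF nf W01 R0 less_imp_le[OF dpos] _ _ ok wid' N0 NL]) (use lt in auto)
      also have "\<dots> \<le> Cn * (A^L * ((L+1) * \<delta> * (infnorm x + 1)))"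
      proof -
        have a: "A ^ length \<theta> \<le> A ^ L" using A1 lenth by (rule power_increasing[rotated])
        have b: "real (length \<theta>) * \<delta> * (infnorm x + 1) \<le> real (L + 1) * \<delta> * (infnorm x + 1)"
          using lenth dpos by (intro mult_right_mono) (auto simp: infnorm_pos_le add_nonneg_nonneg)
        have "A ^ length \<theta> * (real (length \<theta>) * \<delta> * (infnorm x + 1)) \<le> A ^ L * (real (L + 1) * \<delta> * (infnorm x + 1))"
          by (rule mult_mono[OF a b]) (use A1 dpos in \<open>auto simp: infnorm_pos_le add_nonneg_nonneg\<close>)
        thus ?thesis using Cn0 by (rule mult_left_mono)
      qed
      also have "\<dots> = c * (infnorm x + 1)" by (simp add: c_def algebra_simps)
      finally show "nrm (realization \<theta> x - realization \<theta>' x) \<le> c * (infnorm x + 1)" .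
    qed
    have "lp_dist \<mu> p nrm (realization \<theta>) (realization \<theta>') \<le> ennreal (c * (enn2real (C_p \<mu> p) + 2))"
      by (rule lp_bound[OF sets p1 Cp c0 pt])
    also have "c * (enn2real (C_p \<mu> p) + 2) \<le> \<epsilon>"
    proof -
      have "c * (enn2real (C_p \<mu> p) + 2) = (Cn * (enn2real (C_p \<mu> p) + 2)) * (A^L * (L+1) * \<delta>)"
        by (simp add: c_def algebra_simps)
      also have "\<dots> \<le> K0 * (A^L * (L+1) * \<delta>)"
        unfolding K0_def using A1 dpos by (intro mult_right_mono) auto
      also have "\<dots> = \<epsilon>"
      proof -
        have Dp: "K0 * A^L * (real L+1) \<noteq> 0" using K0 A1 by simp
        have "K0 * (A^L * (real (L+1)) * \<delta>) = (K0 * A^L * (real L+1)) * (\<epsilon> / (K0 * A^L * (real L+1)))"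
          unfolding \<delta>_def L_def by (simp add: mult.assoc)
        also have "\<dots> = \<epsilon>" using Dp by simp
        finally show ?thesis .
      qed
      finally show ?thesis .
    qed
    hence "ennreal (c * (enn2real (C_p \<mu> p) + 2)) \<le> ennreal \<epsilon>" by (rule ennreal_leI)
    finally show ?thesis by (simp add: \<theta>'_def)
  qed
  have cov: "is_covering (lp_dist \<mu> p nrm) \<epsilon> E (relu_family q LM r M)"
    unfolding is_covering_def
  proof (intro conjI ballI)
    show "finite E" unfolding E_def using finQ finC by auto
    show "E \<subseteq> relu_family q LM r M" by (rule Esub)
    fix f assume "f \<in> (relu_family q LM r M :: (real^'i \<Rightarrow> real^'o) set)"
    then obtain N S \<theta> where NS: "(N,S) \<in> Q" and th: "\<theta> \<in> Th N S" and f: "f = realization \<theta>"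
      unfolding fam by blast
    have "realization (rep N S (cell S \<theta>)) \<in> E"
      unfolding E_def C_def using NS th by blast
    thus "\<exists>g\<in>E. lp_dist \<mu> p nrm f g \<le> ennreal \<epsilon>" using dist[OF NS th] f by blast
  qed
  have "card E \<le> ((LM M + 2) * (W0n+1)^(LM M+1)) * ((M+1) * (LM M * (W0n+1)^2 + 1)^M) * (2*k+1)^M"
  proof -
    have "card E \<le> card Q * (2*k+1)^M" by (rule cardE)
    also have "\<dots> \<le> (card AN * ((M+1) * (L * (W0n+1)^2 + 1)^M)) * (2*k+1)^M"
      by (intro mult_right_mono cardQ) simp
    also have "\<dots> \<le> ((L + 2) * (W0n+1)^(L+1) * ((M+1) * (L * (W0n+1)^2 + 1)^M)) * (2*k+1)^M"
      by (intro mult_right_mono cardAN) simp_all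
    finally show ?thesis by (simp add: L_def)
  qed
  thus ?thesis using cov by blast
qed




lemma le_mult_ge1: "1 \<le> (a::real) \<Longrightarrow> 0 \<le> b \<Longrightarrow> b \<le> a * b"
  by (simp add: mult_le_cancel_right1)

lemma ge1_mult: "1 \<le> (a::real) \<Longrightarrow> 1 \<le> b \<Longrightarrow> 1 \<le> a*b"
  using mult_mono[of 1 a 1 b] by simp

lemma ln_bound:
  fixes L M W k :: nat and R K0 \<gamma> \<delta> A :: real
  assumes L1: "1 \<le> L" and M1: "1 \<le> M" and R1: "1 \<le> R" and K1: "1 \<le> K0" and g: "0 < \<gamma>"
    and W3: "3 \<le> W" and WM: "M \<le> W"
    and A: "A = real W * R + real W + 1"
    and d: "\<delta> = (real M powr -\<gamma>) / (K0 * A^L * (L+1))"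
    and k: "k = nat \<lceil>R/\<delta>\<rceil>"
  shows "ln (real ((L + 2) * (W+1)^(L+1) * ((M+1) * (L*(W+1)^2+1)^M) * (2*k+1)^M))
     \<le> (15 + ln 5 + ln K0) * (L * M * (1 + ln R) * ln (real W + 2)) + \<gamma> * M * ln (real W + 2)"
proof -
  define u where "u = ln (real W + 2)"
  define \<rho> where "\<rho> = ln R"
  define P where "P = L * M * (1 + \<rho>) * u"
  have u1: "1 \<le> u"
  proof -
    have "exp 1 \<le> real W + 2" using exp_le W3 by linarith
    hence "ln (exp 1) \<le> ln (real W + 2)" by (subst ln_le_cancel_iff) auto
    thus ?thesis unfolding u_def by simp
  qed
  have \<rho>0: "0 \<le> \<rho>" using R1 by (simp add: \<rho>_def)
  have lnW1: "ln (real W + 1) \<le> u" unfolding u_def by simp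
  have lnW: "ln (real W) \<le> u" using W3 unfolding u_def by simp
  have lnM: "ln (real M) \<le> u" "ln (real M + 1) \<le> u" using M1 WM unfolding u_def by auto
  have ln3: "ln 3 \<le> u" using W3 unfolding u_def by simp
  have lnL: "ln (real L + 1) \<le> L" "ln (real L + 2) \<le> L + 1" using ln_le_minus_one[of "real L + 1"] ln_le_minus_one[of "real L + 2"] by auto
  have Lr: "1 \<le> real L" "1 \<le> real M" using L1 M1 by auto
  have P_L: "real L \<le> P" and P_1: "1 \<le> P" and P_u: "u \<le> P" and P_Lu: "L*u \<le> P"
    and P_M: "real M \<le> P" and P_Mu: "M*u \<le> P" and P_ML: "M*L \<le> P" and P_Mr: "M*\<rho> \<le> P"
    and P_MLu: "M*L*u \<le> P" and P_MLr: "M*L*\<rho> \<le> P"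
  proof -
    have "L*M*(1+\<rho>)*u = (L*M*u) + (L*M*\<rho>*u)" by (simp add: algebra_simps)
    moreover have "0 \<le> L*M*\<rho>*u" "0 \<le> L*M*\<rho>" using \<rho>0 u1 by auto
    moreover have "L*M \<le> L*M*u" using mult_left_mono[OF u1, of "real L * M"] by simp
    moreover have "L*M*\<rho> \<le> L*M*\<rho>*u" using mult_left_mono[OF u1, of "real L * M * \<rho>"] \<rho>0 by simp
    moreover have "L*M*\<rho> \<le> L*M*u*\<rho>" using mult_left_mono[OF u1, of "real L * M * \<rho>"] \<rho>0 by (simp add: ac_simps)
    moreover have "real L \<le> L*M" "real M \<le> L*M" using Lr by (auto simp: mult_le_cancel_left1 mult_le_cancel_right1)
    moreover have "1 \<le> real L * M" using mult_mono[OF Lr(1) Lr(2)] by simp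
    moreover have "L*u \<le> L*M*u" using le_mult_ge1[OF Lr(2), of "L*u"] u1 by (simp add: ac_simps)
    moreover have "u \<le> L*u" using le_mult_ge1[OF Lr(1), of "u"] u1 by (simp add: ac_simps)
    moreover have "M*u \<le> L*M*u" using le_mult_ge1[OF Lr(1), of "M*u"] u1 by (simp add: ac_simps)
    moreover have "M*\<rho> \<le> L*M*\<rho>" using le_mult_ge1[OF Lr(1), of "M*\<rho>"] \<rho>0 by (simp add: ac_simps)
    ultimately show "real L \<le> P" "1 \<le> P" "u \<le> P" "L*u \<le> P" "real M \<le> P" "M*u \<le> P" "M*L \<le> P" "M*\<rho> \<le> P"
      "M*L*u \<le> P" "M*L*\<rho> \<le> P"
      unfolding P_def by (simp_all add: algebra_simps)
  qed
  have WR: "real W \<le> real W * R" "1 \<le> real W" using R1 W3 by (auto simp: mult_le_cancel_left1)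
  have A1: "1 \<le> A" "A \<le> 3 * W * R"
  proof -
    show "1 \<le> A" using A WR by linarith
    have "A \<le> 3 * (W * R)" using A WR by linarith
    thus "A \<le> 3 * W * R" by (simp add: mult.assoc)
  qed
  have lnA: "ln A \<le> 2*u + \<rho>"
  proof -
    have "ln A \<le> ln (3 * W * R)" using A1 W3 R1 by (subst ln_le_cancel_iff) auto
    also have "\<dots> = ln 3 + ln W + \<rho>" using W3 R1 by (simp add: ln_mult \<rho>_def)
    finally show ?thesis using ln3 lnW by linarith
  qed
  have Mg: "1 \<le> real M powr \<gamma>" using M1 g by (simp add: ge_one_powr_ge_zero)
  have dpos: "0 < \<delta>" unfolding d using A1 K1 M1 by simp
  have Rd: "R/\<delta> = R * K0 * A^L * (L+1) * real M powr \<gamma>"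
    unfolding d using M1 by (simp add: powr_minus field_simps)
  have Rd1: "1 \<le> R/\<delta>" unfolding Rd using R1 K1 A1 Mg
    by (intro ge1_mult) (simp_all add: one_le_power)
  have kb: "real (2*k+1) \<le> 5 * (R/\<delta>)"
  proof -
    have "real k \<le> R/\<delta> + 1" unfolding k using Rd1 by linarith
    thus ?thesis using Rd1 by simp
  qed
  have t5: "ln (real (2*k+1)) \<le> ln 5 + \<rho> + ln K0 + L*(2*u+\<rho>) + L + \<gamma> * u"
  proof -
    have "ln (real (2*k+1)) \<le> ln (5 * (R/\<delta>))" using kb by simp
    also have "\<dots> = ln 5 + \<rho> + ln K0 + L * ln A + ln (real L + 1) + \<gamma> * ln M"
      unfolding Rd using R1 K1 A1 M1 by (simp add: ln_mult ln_realpow \<rho>_def ln_powr add.commute)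
    also have "\<dots> \<le> ln 5 + \<rho> + ln K0 + L*(2*u+\<rho>) + L + \<gamma> * u"
      using lnA lnL lnM g by (intro add_mono mult_left_mono) auto
    finally show ?thesis .
  qed
  have t4: "ln (real (L*(W+1)^2+1)) \<le> L + 2*u"
  proof -
    have "real (L*(W+1)^2+1) \<le> (real L + 1) * (real W + 1)^2" by (simp add: power2_eq_square algebra_simps)
    hence "ln (real (L*(W+1)^2+1)) \<le> ln ((real L + 1) * (real W + 1)^2)"
      by (subst ln_le_cancel_iff) (auto simp del: of_nat_add of_nat_mult of_nat_power)
    also have "\<dots> = ln (real L + 1) + 2 * ln (real W + 1)" by (simp add: ln_mult ln_realpow)
    finally show ?thesis using lnL lnW1 by linarith
  qed
  have eq: "ln (real ((L + 2) * (W+1)^(L+1) * ((M+1) * (L*(W+1)^2+1)^M) * (2*k+1)^M))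
     = ln (real L + 2) + (L+1) * ln (real W + 1) + ln (real M + 1) + M * ln (real (L*(W+1)^2+1)) + M * ln (real (2*k+1))"
  proof -
    define a where "a = real (L+2)"
    define b where "b = real (W+1)"
    define c where "c = real (M+1)"
    define dd where "dd = real (L*(W+1)^2+1)"
    define e where "e = real (2*k+1)"
    have pos: "0 < a" "0 < b" "0 < c" "0 < dd" "0 < e" unfolding a_def b_def c_def dd_def e_def
      by (simp_all only: of_nat_0_less_iff)
    have "real ((L + 2) * (W+1)^(L+1) * ((M+1) * (L*(W+1)^2+1)^M) * (2*k+1)^M) = a * b^(L+1) * (c * dd^M) * e^M"
      unfolding a_def b_def c_def dd_def e_def by (simp only: of_nat_mult of_nat_power)
    hence "ln (real ((L + 2) * (W+1)^(L+1) * ((M+1) * (L*(W+1)^2+1)^M) * (2*k+1)^M)) = ln a + (L+1) * ln b + (ln c + M * ln dd) + M * ln e"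
      using pos by (simp add: ln_mult ln_realpow distrib_right)
    thus ?thesis by (simp add: a_def b_def c_def dd_def e_def add.commute)
  qed
  have s4: "M * ln (real (L*(W+1)^2+1)) \<le> 3 * P"
  proof -
    have "M * ln (real (L*(W+1)^2+1)) \<le> M * (L + 2*u)" using t4 M1 by (intro mult_left_mono) auto
    also have "\<dots> = M*L + 2*(M*u)" by (simp add: algebra_simps)
    finally show ?thesis using P_ML P_Mu by linarith
  qed
  have s5: "M * ln (real (2*k+1)) \<le> (7 + ln 5 + ln K0) * P + \<gamma> * M * u"
  proof -
    have "M * ln (real (2*k+1)) \<le> M * (ln 5 + \<rho> + ln K0 + L*(2*u+\<rho>) + L + \<gamma> * u)" using t5 M1 by (intro mult_left_mono) auto
    also have "\<dots> = ln 5 * M + M*\<rho> + ln K0 * M + 2*(M*L*u) + M*L*\<rho> + M*L + \<gamma>*M*u" by (simp add: algebra_simps)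
    also have "\<dots> \<le> ln 5 * P + P + ln K0 * P + 2*P + P + P + \<gamma>*M*u"
      using P_M P_Mr P_MLu P_MLr P_ML K1 g by (intro add_mono mult_left_mono) auto
    finally show ?thesis using P_1 by (simp add: algebra_simps)
  qed
  have s2: "(L+1) * ln (real W + 1) \<le> 2 * P"
  proof -
    have "(L+1) * ln (real W + 1) \<le> (L+1) * u" using lnW1 by (intro mult_left_mono) auto
    also have "\<dots> = L*u + u" by (simp add: algebra_simps)
    finally show ?thesis using P_Lu P_u by linarith
  qed
  have "ln (real ((L + 2) * (W+1)^(L+1) * ((M+1) * (L*(W+1)^2+1)^M) * (2*k+1)^M)) \<le> (15 + ln 5 + ln K0) * P + \<gamma> * M * u"
    unfolding eq using lnL(2) s2 lnM(2) s4 s5 P_L P_1 P_u by (simp add: algebra_simps)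
  thus ?thesis unfolding P_def u_def \<rho>_def by simp
qed




lemma bigo_all:
  fixes f :: "nat \<Rightarrow> real"
  assumes "f \<in> O(\<lambda>M. real M powr a)" "0 \<le> a"
  shows "\<exists>C>0. \<forall>M\<ge>1. \<bar>f M\<bar> \<le> C * real M powr a"
proof -
  obtain c where c: "0 < c" "eventually (\<lambda>x. norm (f x) \<le> c * norm (real x powr a)) at_top"
    using landau_o.bigE[OF assms(1)] by blast
  then obtain N where N: "\<And>n. n \<ge> N \<Longrightarrow> \<bar>f n\<bar> \<le> c * \<bar>real n powr a\<bar>"
    by (auto simp: eventually_at_top_linorder)
  define C where "C = c + (\<Sum>j<N. \<bar>f j\<bar>)"
  have S0: "0 \<le> (\<Sum>j<N. \<bar>f j\<bar>)" by (simp add: sum_nonneg)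
  have C0: "0 < C" using c(1) S0 unfolding C_def by linarith
  have "\<forall>M\<ge>1. \<bar>f M\<bar> \<le> C * real M powr a"
  proof (intro allI impI)
    fix M :: nat assume M: "1 \<le> M"
    have p1: "1 \<le> real M powr a" using M assms(2) by (simp add: ge_one_powr_ge_zero)
    show "\<bar>f M\<bar> \<le> C * real M powr a"
    proof (cases "N \<le> M")
      case True
      hence "\<bar>f M\<bar> \<le> c * real M powr a" using N[of M] by simp
      also have "\<dots> \<le> C * real M powr a" using S0 p1 by (intro mult_right_mono) (auto simp: C_def)
      finally show ?thesis .
    next
      case False
      hence "\<bar>f M\<bar> \<le> (\<Sum>j<N. \<bar>f j\<bar>)" by (intro member_le_sum) auto
      also have "\<dots> \<le> C" using c by (simp add: C_def)
      also have "\<dots> \<le> C * real M powr a" using C0 p1 by simp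
      finally show ?thesis .
    qed
  qed
  thus ?thesis using C0 by blast
qed

lemma ln_le_powr_div:
  fixes x a :: real
  assumes "1 \<le> x" "0 < a"
  shows "ln x \<le> x powr a / a"
proof -
  have "ln (x powr a) \<le> x powr a - 1" using assms by (intro ln_le_minus_one) simp
  hence "a * ln x \<le> x powr a" using assms by (simp add: ln_powr)
  thus ?thesis using assms by (simp add: pos_le_divide_eq mult.commute)
qed

lemma u_bound:
  fixes c h :: real and M :: nat
  assumes "1 \<le> c" "0 < h" "1 \<le> M"
  shows "ln (real M + c) \<le> (ln (2*c) + 2/h) * real M powr (h/2)"
proof -
  have M1: "1 \<le> real M" using assms by simp
  have "real M + c \<le> (2*c) * real M"
  proof -
    have "real M \<le> c * real M" "c \<le> c * real M" using assms M1 by (auto simp: mult_le_cancel_right1 mult_le_cancel_left1)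
    thus ?thesis by simp
  qed
  hence "ln (real M + c) \<le> ln ((2*c) * real M)" using assms M1 by (subst ln_le_cancel_iff) auto
  also have "\<dots> = ln (2*c) + ln (real M)" using assms M1 by (simp add: ln_mult)
  also have "\<dots> \<le> ln (2*c) + real M powr (h/2) / (h/2)" using ln_le_powr_div[OF M1, of "h/2"] assms by simp
  also have "\<dots> \<le> ln (2*c) * real M powr (h/2) + (2/h) * real M powr (h/2)"
  proof -
    have p1: "1 \<le> real M powr (h/2)" using M1 assms by (simp add: ge_one_powr_ge_zero)
    have "ln (2*c) \<le> ln (2*c) * real M powr (h/2)" using p1 assms by (simp add: le_mult_ge1 mult.commute)
    moreover have "real M powr (h/2) / (h/2) = (2/h) * real M powr (h/2)" by simp
    ultimately show ?thesis by linarith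
  qed
  also have "\<dots> = (ln (2*c) + 2/h) * real M powr (h/2)" by (simp add: algebra_simps)
  finally show ?thesis .
qed


lemma relu_family_empty: "LM M = 0 \<Longrightarrow> relu_family q LM r M = {}"
  unfolding relu_family_def by auto

theorem mainTheorem17:
  fixes \<mu> :: "(real ^ 'i) measure"
    and p :: ennreal
    and nrm :: "real ^ 'o \<Rightarrow> real"
    and q :: norm_kind
    and LM :: "nat \<Rightarrow> nat"
    and r :: "nat \<Rightarrow> real"
  assumes "sets \<mu> = sets (restrict_space borel (space \<mu>))"
    and "1 \<le> p"
    and "is_norm_fun nrm"
    and "C_p \<mu> p < top"
    and "valid_kind q"
    and "\<And>M. 1 \<le> r M"
    and "\<And>h. h > 0 \<Longrightarrow>
           (\<lambda>M. real (LM M) * real M * (1 + log 2 (r M))) \<in> O(\<lambda>M. real M powr (1 + h))"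
  shows "inf_encodable (lp_dist \<mu> p nrm) (\<lambda>M. relu_family q LM r M :: (real ^ 'i \<Rightarrow> real ^ 'o) set)"
  unfolding inf_encodable_def gamma_encodable_def
proof (intro allI impI)
  fix \<gamma> h :: real assume g: "0 < \<gamma>" and h: "0 < h"
  note sets = assms(1) and p1 = assms(2) and nf = assms(3) and Cp = assms(4) and V = assms(5) and R1 = assms(6)
  define T where "T = (\<lambda>M. real (LM M) * real M * (1 + log 2 (r M)))"
  obtain C where C: "0 < C" "\<And>M. 1 \<le> M \<Longrightarrow> \<bar>T M\<bar> \<le> C * real M powr (1 + h/2)"
    using bigo_all[OF assms(7)[of "h/2"]] h unfolding T_def by auto
  define ci where "ci = CARD('i)"
  define co where "co = CARD('o)"
  have ci1: "1 \<le> ci" "1 \<le> co" unfolding ci_def co_def by (simp_all add: Suc_leI)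
  define Cn where "Cn = (\<Sum>j\<in>UNIV. nrm (axis j 1 :: real^'o))"
  define K0 where "K0 = Cn * (enn2real (C_p \<mu> p) + 2) + 1"
  have Cn0: "0 \<le> Cn" unfolding Cn_def by (intro sum_nonneg) (use norm_fun_props(3)[OF nf] in auto)
  have K1: "1 \<le> K0" using Cn0 by (simp add: K0_def)
  define cu where "cu = ln (2 * (real (ci + co) + 2)) + 2/h"
  define W0n where "W0n = (\<lambda>M::nat. M + CARD('i) + CARD('o))"
  define A where "A = (\<lambda>M. real (W0n M) * r M + real (W0n M) + 1)"
  define \<delta> where "\<delta> = (\<lambda>M. real M powr -\<gamma> / (K0 * A M ^ LM M * real (LM M + 1)))"
  define k where "k = (\<lambda>M. nat \<lceil>r M / \<delta> M\<rceil>)"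
  define B where "B = (\<lambda>M. ((LM M + 2) * (W0n M+1)^(LM M+1)) * ((M+1) * (LM M * (W0n M+1)^2 + 1)^M) * (2*k M+1)^M)"
  define Pr where "Pr = (\<lambda>M (E :: (real^'i \<Rightarrow> real^'o) set). is_covering (lp_dist \<mu> p nrm) (1 * real M powr -\<gamma>) E (relu_family q LM r M) \<and> card E \<le> B M)"
  define E where "E = (\<lambda>M. if LM M = 0 then {} else (SOME E. Pr M E))"
  have ex: "\<exists>E. Pr M E" if M: "1 \<le> M" for M
  proof -
    have "0 < real M powr -\<gamma>" using M by simp
    from cover_M[OF sets p1 nf Cp V R1 M this, of LM]
    show ?thesis unfolding Pr_def B_def k_def \<delta>_def A_def W0n_def K0_def Cn_def by simp
  qed
  define c2 where "c2 = ((15 + ln 5 + ln K0) * C * cu + \<gamma> * cu) / ln 2 + 1"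
  have cu0: "0 < cu" unfolding cu_def using h ci1 by (simp add: add_pos_nonneg)
  have lnK0: "0 \<le> ln K0" using K1 by simp
  have c2pos: "0 < c2" unfolding c2_def using C cu0 g lnK0 by (intro add_nonneg_pos divide_nonneg_pos) auto
  have main: "\<forall>M\<ge>1. is_covering (lp_dist \<mu> p nrm) (1 * real M powr - \<gamma>) (E M) (relu_family q LM r M) \<and>
          log 2 (real (card (E M))) \<le> c2 * real M powr (1 + h)"
  proof (intro allI impI)
    fix M :: nat assume M1: "1 \<le> M"
    have Mp: "0 \<le> c2 * real M powr (1 + h)" using c2pos by simp
    show "is_covering (lp_dist \<mu> p nrm) (1 * real M powr - \<gamma>) (E M) (relu_family q LM r M) \<and>
          log 2 (real (card (E M))) \<le> c2 * real M powr (1 + h)"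
    proof (cases "LM M = 0")
      case True
      thus ?thesis using Mp by (simp add: E_def relu_family_empty is_covering_def log_def)
    next
      case False
      hence L1: "1 \<le> LM M" by simp
      have PE: "Pr M (E M)" using someI_ex[OF ex[OF M1]] False by (simp add: E_def)
      hence cov: "is_covering (lp_dist \<mu> p nrm) (1 * real M powr - \<gamma>) (E M) (relu_family q LM r M)"
        and cB: "card (E M) \<le> B M" by (auto simp: Pr_def)
      have "log 2 (real (card (E M))) \<le> c2 * real M powr (1 + h)"
      proof (cases "card (E M) = 0")
        case True thus ?thesis using Mp by (simp add: log_def)
      next
        case False
        define u where "u = ln (real (W0n M) + 2)"
        define P where "P = real (LM M) * real M * (1 + ln (r M)) * u"
        have "3 \<le> M + ci + co" using ci1 M1 by linarith
        hence W3: "3 \<le> W0n M" and WM: "M \<le> W0n M" by (simp_all add: W0n_def ci_def co_def)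
        have lnB0: "ln (real (B M)) \<le> (15 + ln 5 + ln K0) * (real (LM M * M) * (1 + ln (r M)) * u) + \<gamma> * M * u"
          unfolding B_def u_def
          by (rule ln_bound[where A="A M" and \<delta>="\<delta> M"]) (use L1 M1 R1 K1 g W3 WM in \<open>simp_all add: A_def \<delta>_def k_def\<close>)
        have lnB: "ln (real (B M)) \<le> (15 + ln 5 + ln K0) * P + \<gamma> * M * u"
          using lnB0 unfolding P_def by (simp only: of_nat_mult)
        have uval: "u = ln (real M + (real (ci + co) + 2))" unfolding u_def W0n_def ci_def co_def by (simp add: add.assoc)
        have ub: "u \<le> cu * real M powr (h/2)" unfolding uval cu_def
          by (rule u_bound) (use ci1 h M1 in auto)
        have u0: "0 \<le> u" unfolding u_def by simp
        have lnr: "ln (r M) \<le> log 2 (r M)"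
        proof -
          have "0 \<le> ln (r M)" using R1[of M] by simp
          moreover have "ln 2 \<le> (1::real)" using ln_le_minus_one[of 2] by simp
          moreover have "0 < ln (2::real)" by simp
          ultimately have "ln (r M) * ln 2 \<le> ln (r M)" by (simp add: mult_left_le)
          thus ?thesis by (simp add: log_def pos_le_divide_eq)
        qed
        have Tb: "T M \<le> C * real M powr (1 + h/2)" using C(2)[OF M1] by simp
        have PT: "P \<le> T M * u" unfolding P_def T_def using lnr u0
          by (intro mult_right_mono mult_left_mono) auto
        have powr_eq: "real M powr (1 + h/2) * real M powr (h/2) = real M powr (1 + h)"
          using M1 by (simp add: powr_add[symmetric] add.commute)
        have mono: "real M powr (1 + h/2) \<le> real M powr (1 + h)" using M1 h by (intro powr_mono) auto
        have Pb: "P \<le> C * cu * real M powr (1 + h)"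
        proof -
          have "T M * u \<le> (C * real M powr (1 + h/2)) * (cu * real M powr (h/2))"
          proof (rule mult_mono[OF Tb ub])
            show "0 \<le> C * real M powr (1 + h/2)" using C by simp
            show "0 \<le> u" by (rule u0)
          qed
          also have "\<dots> = C * cu * (real M powr (1 + h/2) * real M powr (h/2))" by (simp add: algebra_simps)
          finally show ?thesis using PT powr_eq by simp
        qed
        have Mu: "real M * u \<le> cu * real M powr (1 + h)"
        proof -
          have "real M * u \<le> real M * (cu * real M powr (h/2))" using ub by (intro mult_left_mono) auto
          also have "\<dots> = cu * (real M powr 1 * real M powr (h/2))" using M1 by simp
          also have "\<dots> = cu * real M powr (1 + h/2)" by (simp only: powr_add)
          also have "\<dots> \<le> cu * real M powr (1 + h)" using mono cu0 by (intro mult_left_mono) auto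
          finally show ?thesis .
        qed
        have "ln (real (card (E M))) \<le> ln (real (B M))" using False cB by (subst ln_le_cancel_iff) auto
        also have "\<dots> \<le> (15 + ln 5 + ln K0) * P + \<gamma> * M * u" by (rule lnB)
        also have "\<dots> \<le> (15 + ln 5 + ln K0) * (C * cu * real M powr (1 + h)) + \<gamma> * (cu * real M powr (1 + h))"
          using Pb Mu g lnK0 by (intro add_mono mult_left_mono) (auto simp: mult.assoc)
        also have "\<dots> = ((15 + ln 5 + ln K0) * C * cu + \<gamma> * cu) * real M powr (1 + h)" by (simp add: algebra_simps)
        finally have "ln (real (card (E M))) / ln 2 \<le> ((15 + ln 5 + ln K0) * C * cu + \<gamma> * cu) * real M powr (1 + h) / ln 2"
          by (simp add: divide_right_mono)
        also have "\<dots> \<le> c2 * real M powr (1 + h)" unfolding c2_def by (simp add: algebra_simps)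
        finally show ?thesis by (simp add: log_def)
      qed
      thus ?thesis using cov by simp
    qed
  qed
  hence "is_encoding (lp_dist \<mu> p nrm) (\<lambda>M. relu_family q LM r M) \<gamma> h E"
    unfolding is_encoding_def using c2pos zero_less_one by blast
  thus "\<exists>E. is_encoding (lp_dist \<mu> p nrm) (\<lambda>M. relu_family q LM r M) \<gamma> h E" by blast
qed


end
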